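(* Let $G$ be a finite group with $\mathcal{D}(G)-\mathcal{D}(Z(G))=3$ and $\mathcal{D}(G/Z(G))=1$. Then $G=KH$ where $K\trianglelefteq G$ has prime order $p$, $H$ is a cyclic subgroup of order $q^2$ for a prime $q$ dividing $p-1$, $K\cap H=1$, and $C_H(K)=Z(G)$ has order $q$.
   Context: $\mathcal{D}(X)$ denotes the number of conjugacy classes of nontrivial subgroups $Y$ of the finite group $X$ with $N_X(Y)\neq Y$. $Z(G)$ is the center of $G$. *)

theory Defs
  imports "HOL-Algebra.Algebra"
begin

definition center :: "('a, 'b) monoid_scheme \<Rightarrow> 'a set" where
  "center G = {z \<in> carrier G. \<forall>g \<in> carrier G. z \<otimes>\<^bsub>G\<^esub> g = g \<otimes>\<^bsub>G\<^esub> z}"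

definition centralizer_in :: "('a, 'b) monoid_scheme \<Rightarrow> 'a set \<Rightarrow> 'a set \<Rightarrow> 'a set" where
  "centralizer_in G H K = {h \<in> H. \<forall>k \<in> K. h \<otimes>\<^bsub>G\<^esub> k = k \<otimes>\<^bsub>G\<^esub> h}"

definition conj_class :: "('a, 'b) monoid_scheme \<Rightarrow> 'a set \<Rightarrow> 'a set set" where
  "conj_class G Y = {g <#\<^bsub>G\<^esub> Y #>\<^bsub>G\<^esub> inv\<^bsub>G\<^esub> g | g. g \<in> carrier G}"

definition nsn_subgroups :: "('a, 'b) monoid_scheme \<Rightarrow> 'a set set" where
  "nsn_subgroups G = {Y. subgroup Y G \<and> Y \<noteq> {\<one>\<^bsub>G\<^esub>} \<and> normalizer G Y \<noteq> Y}"

definition DD :: "('a, 'b) monoid_scheme \<Rightarrow> nat" where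
  "DD G = card (conj_class G ` nsn_subgroups G)"

end

theory Submission
  imports Defs "HOL-Number_Theory.Residues"
begin


definition cj :: "('a, 'b) monoid_scheme \<Rightarrow> 'a \<Rightarrow> 'a set \<Rightarrow> 'a set" where
  "cj G g Y = (\<lambda>y. g \<otimes>\<^bsub>G\<^esub> y \<otimes>\<^bsub>G\<^esub> inv\<^bsub>G\<^esub> g) ` Y"

context group begin

lemma cancel1 [simp]: "g \<in> carrier G \<Longrightarrow> x \<in> carrier G \<Longrightarrow> g \<otimes> (inv g \<otimes> x) = x"
  by (metis inv_closed m_assoc r_inv l_one)
lemma cancel2 [simp]: "g \<in> carrier G \<Longrightarrow> x \<in> carrier G \<Longrightarrow> inv g \<otimes> (g \<otimes> x) = x"
  by (metis inv_closed m_assoc l_inv l_one)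
lemma cancel3 [simp]: "g \<in> carrier G \<Longrightarrow> x \<in> carrier G \<Longrightarrow> x \<otimes> inv g \<otimes> g = x"
  by (metis inv_closed m_assoc l_inv r_one)
lemma cancel4 [simp]: "g \<in> carrier G \<Longrightarrow> x \<in> carrier G \<Longrightarrow> x \<otimes> g \<otimes> inv g = x"
  by (metis inv_closed m_assoc r_inv r_one)

lemma conj_eq_cj: "g <# Y #> inv g = cj G g Y"
  unfolding l_coset_def r_coset_def cj_def by auto

lemma center_sub: "subgroup (center G) G"
proof -
  have cz: "\<And>z g. z \<in> center G \<Longrightarrow> g \<in> carrier G \<Longrightarrow> z \<otimes> g = g \<otimes> z"
    unfolding center_def by auto
  have cc: "\<And>z. z \<in> center G \<Longrightarrow> z \<in> carrier G" unfolding center_def by auto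
  have mc: "x \<otimes> y \<in> center G" if x: "x \<in> center G" and y: "y \<in> center G" for x y
  proof -
    have xc: "x \<in> carrier G" "y \<in> carrier G" using x y cc by auto
    have "\<forall>g\<in>carrier G. x \<otimes> y \<otimes> g = g \<otimes> (x \<otimes> y)"
    proof
      fix g assume g: "g \<in> carrier G"
      have "x \<otimes> y \<otimes> g = x \<otimes> (y \<otimes> g)" using xc g by (rule_tac m_assoc) auto
      also have "\<dots> = x \<otimes> (g \<otimes> y)" using cz[OF y g] by simp
      also have "\<dots> = (x \<otimes> g) \<otimes> y" using xc g by (metis m_assoc)
      also have "\<dots> = (g \<otimes> x) \<otimes> y" using cz[OF x g] by simp
      also have "\<dots> = g \<otimes> (x \<otimes> y)" using xc g by (metis m_assoc)
      finally show "x \<otimes> y \<otimes> g = g \<otimes> (x \<otimes> y)" .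
    qed
    thus ?thesis unfolding center_def using xc by auto
  qed
  have ic: "inv x \<in> center G" if x: "x \<in> center G" for x
  proof -
    have xc: "x \<in> carrier G" using x cc by auto
    have "\<forall>g\<in>carrier G. inv x \<otimes> g = g \<otimes> inv x"
    proof
      fix g assume g: "g \<in> carrier G"
      have e: "x \<otimes> g = g \<otimes> x" using cz[OF x g] .
      have "inv x \<otimes> g = inv x \<otimes> (g \<otimes> x) \<otimes> inv x" using xc g by (metis cancel4 m_assoc m_closed inv_closed)
      also have "\<dots> = inv x \<otimes> (x \<otimes> g) \<otimes> inv x" using e by simp
      also have "\<dots> = g \<otimes> inv x" using xc g by simp
      finally show "inv x \<otimes> g = g \<otimes> inv x" .
    qed
    thus ?thesis unfolding center_def using xc by auto
  qed
  have oc: "\<one> \<in> center G" unfolding center_def by auto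
  show ?thesis
  proof (rule subgroupI)
    show "center G \<subseteq> carrier G" using cc by auto
    show "center G \<noteq> {}" using oc by auto
    show "\<And>a. a \<in> center G \<Longrightarrow> inv a \<in> center G" by (rule ic)
    show "\<And>a b. a \<in> center G \<Longrightarrow> b \<in> center G \<Longrightarrow> a \<otimes> b \<in> center G" by (rule mc)
  qed
qed

lemma center_comm: "z \<in> center G \<Longrightarrow> g \<in> carrier G \<Longrightarrow> z \<otimes> g = g \<otimes> z"
  unfolding center_def by auto

lemma center_carrier: "z \<in> center G \<Longrightarrow> z \<in> carrier G"
  unfolding center_def by auto

lemma normalizer_iff: "Y \<subseteq> carrier G \<Longrightarrow> normalizer G Y = {g \<in> carrier G. cj G g Y = Y}"
  unfolding normalizer_def stabilizer_def by (auto simp: conj_eq_cj)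

lemma cj_elem: "g \<in> carrier G \<Longrightarrow> y \<in> Y \<Longrightarrow> g \<otimes> y \<otimes> inv g \<in> cj G g Y"
  unfolding cj_def by auto

lemma cj_carrier: "g \<in> carrier G \<Longrightarrow> Y \<subseteq> carrier G \<Longrightarrow> cj G g Y \<subseteq> carrier G"
  unfolding cj_def by auto

lemma cj_sub: "subgroup Y G \<Longrightarrow> g \<in> carrier G \<Longrightarrow> subgroup (cj G g Y) G"
  using subgroup_conjugation_is_surj2 conj_eq_cj by metis

lemma cj_inj: "g \<in> carrier G \<Longrightarrow> Y \<subseteq> carrier G \<Longrightarrow> inj_on (\<lambda>y. g \<otimes> y \<otimes> inv g) Y"
  unfolding inj_on_def by (metis conjugation_is_inj subsetD)

lemma cj_card: "g \<in> carrier G \<Longrightarrow> Y \<subseteq> carrier G \<Longrightarrow> card (cj G g Y) = card Y"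
  unfolding cj_def using cj_inj card_image by blast

lemma cj_comp: "g \<in> carrier G \<Longrightarrow> h \<in> carrier G \<Longrightarrow> Y \<subseteq> carrier G \<Longrightarrow>
   cj G g (cj G h Y) = cj G (g \<otimes> h) Y"
  unfolding cj_def image_image
  apply (rule image_cong[OF refl])
  by (simp add: inv_mult_group m_assoc subsetD)

lemma cj_one: "Y \<subseteq> carrier G \<Longrightarrow> cj G \<one> Y = Y"
  unfolding cj_def by (auto simp: subsetD image_iff)

lemma cj_inv: "g \<in> carrier G \<Longrightarrow> Y \<subseteq> carrier G \<Longrightarrow> cj G (inv g) (cj G g Y) = Y"
  by (simp add: cj_comp cj_one)

lemma cj_inv2: "g \<in> carrier G \<Longrightarrow> Y \<subseteq> carrier G \<Longrightarrow> cj G g (cj G (inv g) Y) = Y"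
  by (simp add: cj_comp cj_one)

lemma cj_mono: "Y1 \<subseteq> Y2 \<Longrightarrow> cj G g Y1 \<subseteq> cj G g Y2"
  unfolding cj_def by auto

lemma mem_cj: "g \<in> carrier G \<Longrightarrow> Y \<subseteq> carrier G \<Longrightarrow> x \<in> carrier G \<Longrightarrow>
   x \<in> cj G g Y \<longleftrightarrow> inv g \<otimes> x \<otimes> g \<in> Y"
proof
  assume g: "g \<in> carrier G" and Y: "Y \<subseteq> carrier G" and x: "x \<in> carrier G"
  { assume "x \<in> cj G g Y"
    then obtain y where y: "y \<in> Y" "x = g \<otimes> y \<otimes> inv g" unfolding cj_def by auto
    have yc: "y \<in> carrier G" using y Y by auto
    have "inv g \<otimes> x \<otimes> g = (inv g \<otimes> g) \<otimes> y \<otimes> (inv g \<otimes> g)" using y(2) g yc by (metis inv_closed m_assoc m_closed)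
    hence "inv g \<otimes> x \<otimes> g = y" using g yc by (metis inv_closed l_inv r_one l_one m_assoc)
    thus "inv g \<otimes> x \<otimes> g \<in> Y" using y by simp }
  { assume "inv g \<otimes> x \<otimes> g \<in> Y"
    moreover have "g \<otimes> (inv g \<otimes> x \<otimes> g) \<otimes> inv g = x" using g x by (simp add: m_assoc)
    ultimately show "x \<in> cj G g Y" using cj_elem[OF g] by metis }
qed

lemma cj_center: "Y \<subseteq> center G \<Longrightarrow> g \<in> carrier G \<Longrightarrow> cj G g Y = Y"
proof -
  assume Y: "Y \<subseteq> center G" and g: "g \<in> carrier G"
  have "\<And>y. y \<in> Y \<Longrightarrow> g \<otimes> y \<otimes> inv g = y"
  proof -
    fix y assume "y \<in> Y"
    hence yz: "y \<in> center G" using Y by auto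
    hence yc: "y \<in> carrier G" by (rule center_carrier)
    have "g \<otimes> y \<otimes> inv g = y \<otimes> g \<otimes> inv g" using center_comm[OF yz g] by simp
    thus "g \<otimes> y \<otimes> inv g = y" using g yc by (simp add: m_assoc)
  qed
  thus ?thesis unfolding cj_def by (auto simp: image_iff)
qed

lemma cj_Z: "g \<in> carrier G \<Longrightarrow> cj G g (center G) = center G"
  by (simp add: cj_center)

lemma cj_subZ_iff: "g \<in> carrier G \<Longrightarrow> Y \<subseteq> carrier G \<Longrightarrow> cj G g Y \<subseteq> center G \<longleftrightarrow> Y \<subseteq> center G"
proof
  assume g: "g \<in> carrier G" and Y: "Y \<subseteq> carrier G"
  { assume "cj G g Y \<subseteq> center G"
    hence "cj G (inv g) (cj G g Y) \<subseteq> cj G (inv g) (center G)" by (rule cj_mono)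
    thus "Y \<subseteq> center G" using g Y by (simp add: cj_inv cj_Z) }
  { assume "Y \<subseteq> center G" thus "cj G g Y \<subseteq> center G" using g by (simp add: cj_center) }
qed

lemma cj_Zsub_iff: "g \<in> carrier G \<Longrightarrow> Y \<subseteq> carrier G \<Longrightarrow> center G \<subseteq> cj G g Y \<longleftrightarrow> center G \<subseteq> Y"
proof
  assume g: "g \<in> carrier G" and Y: "Y \<subseteq> carrier G"
  { assume "center G \<subseteq> cj G g Y"
    hence "cj G (inv g) (center G) \<subseteq> cj G (inv g) (cj G g Y)" by (rule cj_mono)
    thus "center G \<subseteq> Y" using g Y by (simp add: cj_inv cj_Z) }
  { assume "center G \<subseteq> Y"
    hence "cj G g (center G) \<subseteq> cj G g Y" by (rule cj_mono)
    thus "center G \<subseteq> cj G g Y" using g by (simp add: cj_Z) }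
qed

lemma cj_Int: "g \<in> carrier G \<Longrightarrow> A \<subseteq> carrier G \<Longrightarrow> B \<subseteq> carrier G \<Longrightarrow>
  cj G g (A \<inter> B) = cj G g A \<inter> cj G g B"
  unfolding cj_def by (rule inj_on_image_Int[OF cj_inj]) auto

lemma cc_eq: "conj_class G Y = (\<lambda>g. cj G g Y) ` carrier G"
  unfolding conj_class_def conj_eq_cj by auto

lemma cc_self: "Y \<subseteq> carrier G \<Longrightarrow> Y \<in> conj_class G Y"
proof -
  assume "Y \<subseteq> carrier G"
  hence "cj G \<one> Y = Y" by (rule cj_one)
  thus ?thesis unfolding cc_eq by (metis image_eqI one_closed)
qed

lemma cc_trans: "Y2 \<subseteq> carrier G \<Longrightarrow> Y1 \<in> conj_class G Y2 \<Longrightarrow> conj_class G Y1 = conj_class G Y2"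
proof -
  assume Y2: "Y2 \<subseteq> carrier G" and "Y1 \<in> conj_class G Y2"
  then obtain h where h: "h \<in> carrier G" "Y1 = cj G h Y2" unfolding cc_eq by auto
  show ?thesis unfolding cc_eq
  proof
    show "(\<lambda>g. cj G g Y1) ` carrier G \<subseteq> (\<lambda>g. cj G g Y2) ` carrier G"
    proof
      fix W assume "W \<in> (\<lambda>g. cj G g Y1) ` carrier G"
      then obtain g where g: "g \<in> carrier G" "W = cj G g Y1" by auto
      have "W = cj G (g \<otimes> h) Y2" using g h Y2 by (simp add: cj_comp)
      thus "W \<in> (\<lambda>g. cj G g Y2) ` carrier G" using g h by auto
    qed
    show "(\<lambda>g. cj G g Y2) ` carrier G \<subseteq> (\<lambda>g. cj G g Y1) ` carrier G"
    proof
      fix W assume "W \<in> (\<lambda>g. cj G g Y2) ` carrier G"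
      then obtain g where g: "g \<in> carrier G" "W = cj G g Y2" by auto
      have "W = cj G (g \<otimes> inv h) Y1" using g h Y2 by (simp add: cj_comp m_assoc)
      thus "W \<in> (\<lambda>g. cj G g Y1) ` carrier G" using g h by auto
    qed
  qed
qed

lemma cc_eq_iff: "Y1 \<subseteq> carrier G \<Longrightarrow> Y2 \<subseteq> carrier G \<Longrightarrow>
  conj_class G Y1 = conj_class G Y2 \<longleftrightarrow> (\<exists>g\<in>carrier G. Y1 = cj G g Y2)"
proof
  assume Y: "Y1 \<subseteq> carrier G" "Y2 \<subseteq> carrier G"
  { assume "conj_class G Y1 = conj_class G Y2"
    hence "Y1 \<in> conj_class G Y2" using cc_self[OF Y(1)] by simp
    thus "\<exists>g\<in>carrier G. Y1 = cj G g Y2" unfolding cc_eq by auto }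
  { assume "\<exists>g\<in>carrier G. Y1 = cj G g Y2"
    hence "Y1 \<in> conj_class G Y2" unfolding cc_eq by auto
    thus "conj_class G Y1 = conj_class G Y2" using cc_trans Y by blast }
qed

end


definition lowS :: "('a, 'b) monoid_scheme \<Rightarrow> 'a set set" where
  "lowS G = {Y. subgroup Y G \<and> Y \<noteq> {\<one>\<^bsub>G\<^esub>} \<and> Y \<subseteq> center G}"
definition highS :: "('a, 'b) monoid_scheme \<Rightarrow> 'a set set" where
  "highS G = {Y. subgroup Y G \<and> center G \<subseteq> Y \<and> \<not> Y \<subseteq> center G \<and> normalizer G Y \<noteq> Y}"
definition mixedS :: "('a, 'b) monoid_scheme \<Rightarrow> 'a set set" where
  "mixedS G = {Y. subgroup Y G \<and> \<not> Y \<subseteq> center G \<and> \<not> center G \<subseteq> Y}"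

context group begin

lemma cj_by_center: "z \<in> center G \<Longrightarrow> Y \<subseteq> carrier G \<Longrightarrow> cj G z Y = Y"
proof -
  assume z: "z \<in> center G" and Y: "Y \<subseteq> carrier G"
  have zc: "z \<in> carrier G" using z center_carrier by auto
  have "\<And>y. y \<in> Y \<Longrightarrow> z \<otimes> y \<otimes> inv z = y"
    using center_comm[OF z] zc Y by (metis cancel4 subsetD)
  thus ?thesis unfolding cj_def by (auto simp: image_iff)
qed

lemma center_in_normalizer: "Y \<subseteq> carrier G \<Longrightarrow> center G \<subseteq> normalizer G Y"
  using normalizer_iff cj_by_center center_carrier by auto

lemma sub_in_normalizer: "subgroup Y G \<Longrightarrow> Y \<subseteq> normalizer G Y"
proof
  fix g assume Y: "subgroup Y G" and g: "g \<in> Y"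
  have gc: "g \<in> carrier G" using Y g subgroup.subset by blast
  have "cj G g Y = Y"
  proof
    show "cj G g Y \<subseteq> Y" unfolding cj_def using Y g
      by (auto intro!: subgroup.m_closed subgroup.m_inv_closed)
    show "Y \<subseteq> cj G g Y"
    proof
      fix y assume y: "y \<in> Y"
      have yc: "y \<in> carrier G" using Y y subgroup.subset by blast
      have "inv g \<otimes> y \<otimes> g \<in> Y" using Y g y by (auto intro!: subgroup.m_closed subgroup.m_inv_closed)
      thus "y \<in> cj G g Y" using mem_cj[OF gc _ yc] Y subgroup.subset by blast
    qed
  qed
  thus "g \<in> normalizer G Y" using normalizer_iff Y subgroup.subset gc by blast
qed

lemma nsn_split:
  assumes ZG: "center G \<noteq> carrier G"
  shows "nsn_subgroups G = lowS G \<union> highS G \<union> mixedS G"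
proof
  show "nsn_subgroups G \<subseteq> lowS G \<union> highS G \<union> mixedS G"
    unfolding nsn_subgroups_def lowS_def highS_def mixedS_def by blast
next
  have Zc: "center G \<subseteq> carrier G" using center_carrier by auto
  have one_Z: "\<one> \<in> center G" using center_sub subgroup.one_closed by blast
  have "lowS G \<subseteq> nsn_subgroups G"
  proof
    fix Y assume "Y \<in> lowS G"
    hence Y: "subgroup Y G" "Y \<noteq> {\<one>}" "Y \<subseteq> center G" unfolding lowS_def by auto
    have "normalizer G Y = carrier G"
      using normalizer_iff[of Y] Y(3) Zc cj_center by auto
    hence "normalizer G Y \<noteq> Y" using Y(3) ZG Zc by auto
    thus "Y \<in> nsn_subgroups G" using Y unfolding nsn_subgroups_def by auto
  qed
  moreover have "highS G \<subseteq> nsn_subgroups G"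
  proof
    fix Y assume "Y \<in> highS G"
    hence Y: "subgroup Y G" "center G \<subseteq> Y" "\<not> Y \<subseteq> center G" "normalizer G Y \<noteq> Y"
      unfolding highS_def by auto
    have "Y \<noteq> {\<one>}" using Y(3) one_Z by auto
    thus "Y \<in> nsn_subgroups G" using Y unfolding nsn_subgroups_def by auto
  qed
  moreover have "mixedS G \<subseteq> nsn_subgroups G"
  proof
    fix Y assume "Y \<in> mixedS G"
    hence Y: "subgroup Y G" "\<not> Y \<subseteq> center G" "\<not> center G \<subseteq> Y"
      unfolding mixedS_def by auto
    have "Y \<noteq> {\<one>}" using Y(2) one_Z by auto
    moreover have "normalizer G Y \<noteq> Y" using center_in_normalizer[of Y] Y subgroup.subset by blast
    ultimately show "Y \<in> nsn_subgroups G" using Y unfolding nsn_subgroups_def by auto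
  qed
  ultimately show "lowS G \<union> highS G \<union> mixedS G \<subseteq> nsn_subgroups G" by blast
qed

lemma cc_type:
  assumes Y1: "subgroup Y1 G" and Y2: "subgroup Y2 G" and eq: "conj_class G Y1 = conj_class G Y2"
  shows "(Y1 \<subseteq> center G \<longleftrightarrow> Y2 \<subseteq> center G) \<and> (center G \<subseteq> Y1 \<longleftrightarrow> center G \<subseteq> Y2)"
proof -
  obtain g where g: "g \<in> carrier G" "Y1 = cj G g Y2"
    using cc_eq_iff[of Y1 Y2] eq Y1 Y2 subgroup.subset by blast
  thus ?thesis using cj_subZ_iff cj_Zsub_iff Y2 subgroup.subset by metis
qed

lemma finite_cc_img: "finite (carrier G) \<Longrightarrow> S \<subseteq> {Y. Y \<subseteq> carrier G} \<Longrightarrow> finite (conj_class G ` S)"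
proof -
  assume f: "finite (carrier G)" and S: "S \<subseteq> {Y. Y \<subseteq> carrier G}"
  have "S \<subseteq> Pow (carrier G)" using S by auto
  hence "finite S" using f finite_subset finite_Pow_iff by blast
  thus ?thesis by simp
qed

lemma DD_split:
  assumes f: "finite (carrier G)" and ZG: "center G \<noteq> carrier G"
  shows "DD G = card (conj_class G ` lowS G) + card (conj_class G ` highS G) + card (conj_class G ` mixedS G)"
proof -
  have sub: "\<And>S. S \<subseteq> {Y. subgroup Y G} \<Longrightarrow> S \<subseteq> {Y. Y \<subseteq> carrier G}" using subgroup.subset by blast
  have fl: "finite (conj_class G ` lowS G)" by (rule finite_cc_img[OF f]) (auto simp: lowS_def dest: subgroup.subset)
  have fh: "finite (conj_class G ` highS G)" by (rule finite_cc_img[OF f]) (auto simp: highS_def dest: subgroup.subset)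
  have fm: "finite (conj_class G ` mixedS G)" by (rule finite_cc_img[OF f]) (auto simp: mixedS_def dest: subgroup.subset)
  have d1: "conj_class G ` lowS G \<inter> conj_class G ` highS G = {}"
  proof (rule ccontr)
    assume "conj_class G ` lowS G \<inter> conj_class G ` highS G \<noteq> {}"
    then obtain Y1 Y2 where Y: "Y1 \<in> lowS G" "Y2 \<in> highS G" "conj_class G Y1 = conj_class G Y2" by auto
    have s: "subgroup Y1 G" "subgroup Y2 G" "Y1 \<subseteq> center G" "\<not> Y2 \<subseteq> center G"
      using Y(1,2) unfolding lowS_def highS_def by auto
    show False using cc_type[OF s(1,2) Y(3)] s(3,4) by simp
  qed
  have d2: "(conj_class G ` lowS G \<union> conj_class G ` highS G) \<inter> conj_class G ` mixedS G = {}"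
  proof (rule ccontr)
    assume "(conj_class G ` lowS G \<union> conj_class G ` highS G) \<inter> conj_class G ` mixedS G \<noteq> {}"
    then obtain Y1 Y2 where Y: "Y1 \<in> lowS G \<union> highS G" "Y2 \<in> mixedS G" "conj_class G Y1 = conj_class G Y2" by auto
    have s: "subgroup Y1 G" "subgroup Y2 G" "Y1 \<subseteq> center G \<or> center G \<subseteq> Y1" "\<not> Y2 \<subseteq> center G" "\<not> center G \<subseteq> Y2"
      using Y(1,2) unfolding lowS_def highS_def mixedS_def by auto
    show False using cc_type[OF s(1,2) Y(3)] s(3,4,5) by blast
  qed
  have "DD G = card (conj_class G ` lowS G \<union> conj_class G ` highS G \<union> conj_class G ` mixedS G)"
    unfolding DD_def nsn_split[OF ZG] image_Un by simp
  also have "\<dots> = card (conj_class G ` lowS G \<union> conj_class G ` highS G) + card (conj_class G ` mixedS G)"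
    using fl fh fm d2 by (simp add: card_Un_disjoint)
  also have "card (conj_class G ` lowS G \<union> conj_class G ` highS G) = card (conj_class G ` lowS G) + card (conj_class G ` highS G)"
    using fl fh d1 by (simp add: card_Un_disjoint)
  finally show ?thesis .
qed

lemma cc_low: "Y \<subseteq> center G \<Longrightarrow> conj_class G Y = {Y}"
  unfolding cc_eq using cj_center by auto

lemma card_cc_low: "card (conj_class G ` lowS G) = card (lowS G)"
proof -
  have "inj_on (conj_class G) (lowS G)"
    by (rule inj_onI) (auto simp: lowS_def cc_low)
  thus ?thesis by (rule card_image)
qed

lemma DD_center: "DD (G\<lparr>carrier := center G\<rparr>) = card (lowS G - {center G})"
proof -
  let ?Zs = "G\<lparr>carrier := center G\<rparr>"
  have grp: "group ?Zs" using subgroup_imp_group center_sub by blast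
  have sub_iff: "subgroup Y ?Zs \<longleftrightarrow> subgroup Y G \<and> Y \<subseteq> center G" for Y
  proof
    assume a: "subgroup Y ?Zs"
    have "subgroup Y G" by (rule incl_subgroup[OF center_sub a])
    moreover have "Y \<subseteq> center G" using subgroup.subset[OF a] by simp
    ultimately show "subgroup Y G \<and> Y \<subseteq> center G" by simp
  next
    assume "subgroup Y G \<and> Y \<subseteq> center G"
    thus "subgroup Y ?Zs" using subgroup_incl[OF _ center_sub] by blast
  qed
  have cjZ: "cj ?Zs g Y = cj G g Y" if "g \<in> center G" for g Y
    unfolding cj_def using that center_sub by simp
  have norm: "normalizer ?Zs Y = center G" if "Y \<subseteq> center G" for Y
  proof -
    have "normalizer ?Zs Y = {g \<in> center G. cj ?Zs g Y = Y}"
      using group.normalizer_iff[OF grp, of Y] that by simp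
    also have "\<dots> = center G" using cjZ cj_center that center_carrier by auto
    finally show ?thesis .
  qed
  have cc: "conj_class ?Zs Y = {Y}" if "Y \<subseteq> center G" for Y
  proof -
    have "conj_class ?Zs Y = (\<lambda>g. cj ?Zs g Y) ` center G"
      using group.cc_eq[OF grp, of Y] by simp
    also have "\<dots> = {Y}" using cjZ cj_center that center_carrier one_closed
      using center_sub subgroup.one_closed by fastforce
    finally show ?thesis .
  qed
  have nsn: "nsn_subgroups ?Zs = lowS G - {center G}"
    unfolding nsn_subgroups_def lowS_def using sub_iff norm by auto
  have "inj_on (conj_class ?Zs) (lowS G - {center G})"
    by (rule inj_onI) (auto simp: lowS_def cc)
  thus ?thesis unfolding DD_def nsn by (rule card_image)
qed

end


definition phiQ :: "('a, 'b) monoid_scheme \<Rightarrow> 'a set \<Rightarrow> 'a set set" where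
  "phiQ G Y = (\<lambda>y. center G #>\<^bsub>G\<^esub> y) ` Y"

context group begin

lemma Z_normal: "center G \<lhd> G"
proof (rule normal_invI[OF center_sub])
  fix x h assume x: "x \<in> carrier G" and h: "h \<in> center G"
  have "x \<otimes> h \<otimes> inv x = h" using center_comm[OF h x] x center_carrier[OF h] by (metis cancel4)
  thus "x \<otimes> h \<otimes> inv x \<in> center G" using h by simp
qed

lemma Qgrp: "group (G Mod center G)"
  using normal.factorgroup_is_group[OF Z_normal] .

lemma Qhom: "group_hom G (G Mod center G) (\<lambda>a. center G #> a)"
  using normal.r_coset_hom_Mod[OF Z_normal] Qgrp is_group
  by (simp add: group_hom_def group_hom_axioms_def)

lemma Q_carrier: "carrier (G Mod center G) = (\<lambda>x. center G #> x) ` carrier G"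
  by (rule carrier_FactGroup)

lemma phi_carrier: "Y \<subseteq> carrier G \<Longrightarrow> phiQ G Y \<subseteq> carrier (G Mod center G)"
  unfolding phiQ_def Q_carrier by auto

lemma Q_inv: "g \<in> carrier G \<Longrightarrow> inv\<^bsub>G Mod center G\<^esub> (center G #> g) = center G #> inv g"
proof -
  assume g: "g \<in> carrier G"
  have "center G #> g \<in> carrier (G Mod center G)" using g Q_carrier by auto
  hence "inv\<^bsub>G Mod center G\<^esub> (center G #> g) = set_inv (center G #> g)"
    using normal.inv_FactGroup[OF Z_normal] by blast
  also have "\<dots> = center G #> inv g" using normal.rcos_inv[OF Z_normal g] .
  finally show ?thesis .
qed

lemma Q_mult: "g \<in> carrier G \<Longrightarrow> h \<in> carrier G \<Longrightarrow>
   (center G #> g) \<otimes>\<^bsub>G Mod center G\<^esub> (center G #> h) = center G #> (g \<otimes> h)"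
  using normal.rcos_sum[OF Z_normal] by simp

lemma phi_cj: "g \<in> carrier G \<Longrightarrow> Y \<subseteq> carrier G \<Longrightarrow>
   cj (G Mod center G) (center G #> g) (phiQ G Y) = phiQ G (cj G g Y)"
proof -
  assume g: "g \<in> carrier G" and Y: "Y \<subseteq> carrier G"
  have "\<And>y. y \<in> Y \<Longrightarrow> (center G #> g) \<otimes>\<^bsub>G Mod center G\<^esub> (center G #> y) \<otimes>\<^bsub>G Mod center G\<^esub>
        inv\<^bsub>G Mod center G\<^esub> (center G #> g) = center G #> (g \<otimes> y \<otimes> inv g)"
  proof -
    fix y assume "y \<in> Y"
    hence y: "y \<in> carrier G" using Y by auto
    have "(center G #> g) <#> (center G #> y) <#> (center G #> inv g) = center G #> (g \<otimes> y \<otimes> inv g)"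
      using g y by (simp add: normal.rcos_sum[OF Z_normal])
    thus "?thesis y" using g y by (simp add: Q_inv)
  qed
  thus ?thesis unfolding cj_def phiQ_def image_image by (auto intro: image_cong)
qed

lemma phi_sub: "subgroup Y G \<Longrightarrow> subgroup (phiQ G Y) (G Mod center G)"
  unfolding phiQ_def using group_hom.subgroup_img_is_subgroup[OF Qhom] by blast

lemma union_phi: "subgroup Y G \<Longrightarrow> center G \<subseteq> Y \<Longrightarrow> \<Union>(phiQ G Y) = Y"
proof
  assume Y: "subgroup Y G" and ZY: "center G \<subseteq> Y"
  show "\<Union>(phiQ G Y) \<subseteq> Y"
  proof
    fix x assume "x \<in> \<Union>(phiQ G Y)"
    then obtain y z where yz: "y \<in> Y" "z \<in> center G" "x = z \<otimes> y" unfolding phiQ_def r_coset_def by auto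
    have "z \<in> Y" using yz(2) ZY by auto
    thus "x \<in> Y" using yz(1,3) subgroup.m_closed[OF Y] by simp
  qed
  show "Y \<subseteq> \<Union>(phiQ G Y)"
  proof
    fix y assume y: "y \<in> Y"
    hence "y \<in> center G #> y" using rcos_self center_sub Y subgroup.subset by blast
    thus "y \<in> \<Union>(phiQ G Y)" using y unfolding phiQ_def by auto
  qed
qed

lemma phi_inj: "subgroup Y1 G \<Longrightarrow> center G \<subseteq> Y1 \<Longrightarrow> subgroup Y2 G \<Longrightarrow> center G \<subseteq> Y2 \<Longrightarrow>
   phiQ G Y1 = phiQ G Y2 \<Longrightarrow> Y1 = Y2"
  using union_phi by metis

lemma phi_Z: "phiQ G (center G) = {center G}"
  unfolding phiQ_def using coset_join2 center_sub center_carrier subgroup.one_closed by fastforce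

lemma coset_in: "subgroup Y G \<Longrightarrow> center G \<subseteq> Y \<Longrightarrow> g \<in> carrier G \<Longrightarrow> center G #> g \<in> phiQ G Y \<Longrightarrow> g \<in> Y"
proof -
  assume Y: "subgroup Y G" "center G \<subseteq> Y" and g: "g \<in> carrier G" and "center G #> g \<in> phiQ G Y"
  hence "g \<in> \<Union>(phiQ G Y)" using rcos_self[OF g center_sub] by blast
  thus "g \<in> Y" using union_phi Y by blast
qed

lemma high_to_Q: assumes Y: "Y \<in> highS G" shows "phiQ G Y \<in> nsn_subgroups (G Mod center G)"
proof -
  have Y1: "subgroup Y G" "center G \<subseteq> Y" "\<not> Y \<subseteq> center G" "normalizer G Y \<noteq> Y"
    using Y unfolding highS_def by auto
  have Yc: "Y \<subseteq> carrier G" using Y1 subgroup.subset by blast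
  have sQ: "subgroup (phiQ G Y) (G Mod center G)" using phi_sub Y1 by blast
  obtain y where y: "y \<in> Y" "y \<notin> center G" using Y1 by auto
  have "center G #> y \<noteq> center G"
    using rcos_self[OF _ center_sub, of y] y Yc by auto
  hence ne: "phiQ G Y \<noteq> {\<one>\<^bsub>G Mod center G\<^esub>}" using y unfolding phiQ_def by auto
  obtain g where g: "g \<in> normalizer G Y" "g \<notin> Y"
    using sub_in_normalizer[OF Y1(1)] Y1(4) by blast
  have gc: "g \<in> carrier G" "cj G g Y = Y" using g normalizer_iff Yc by auto
  have "center G #> g \<in> normalizer (G Mod center G) (phiQ G Y)"
    using group.normalizer_iff[OF Qgrp phi_carrier[OF Yc]] phi_cj[OF gc(1) Yc] gc Q_carrier by auto
  moreover have "center G #> g \<notin> phiQ G Y" using coset_in Y1 gc g by blast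
  ultimately have "normalizer (G Mod center G) (phiQ G Y) \<noteq> phiQ G Y" by blast
  thus ?thesis using sQ ne unfolding nsn_subgroups_def by auto
qed

lemma Q_to_high: assumes A: "A \<in> nsn_subgroups (G Mod center G)" shows "\<Union>A \<in> highS G"
proof -
  interpret N: normal "center G" G using Z_normal .
  have A1: "subgroup A (G Mod center G)" "A \<noteq> {\<one>\<^bsub>G Mod center G\<^esub>}"
    "normalizer (G Mod center G) A \<noteq> A" using A unfolding nsn_subgroups_def by auto
  let ?Y = "\<Union>A"
  have sY: "subgroup ?Y G" using N.factgroup_subgroup_union_subgroup A1(1) .
  have char: "?Y = {x \<in> carrier G. center G #> x \<in> A}" using N.factgroup_subgroup_union_char A1(1) .
  have Ac: "A \<subseteq> carrier (G Mod center G)" using A1(1) subgroup.subset by blast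
  have phiY: "phiQ G ?Y = A"
  proof
    show "phiQ G ?Y \<subseteq> A" unfolding phiQ_def using char by auto
    show "A \<subseteq> phiQ G ?Y"
    proof
      fix a assume a: "a \<in> A"
      then obtain x where x: "x \<in> carrier G" "a = center G #> x" using Ac Q_carrier by auto
      hence "x \<in> ?Y" using char a by auto
      thus "a \<in> phiQ G ?Y" unfolding phiQ_def using x by auto
    qed
  qed
  have ZY: "center G \<subseteq> ?Y"
  proof -
    have "\<one>\<^bsub>G Mod center G\<^esub> \<in> A" using A1(1) subgroup.one_closed by blast
    thus ?thesis by auto
  qed
  have nZ: "\<not> ?Y \<subseteq> center G"
  proof
    assume "?Y \<subseteq> center G"
    hence "?Y = center G" using ZY by auto
    hence "A = {center G}" using phiY phi_Z by auto
    thus False using A1(2) by simp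
  qed
  obtain a where a: "a \<in> normalizer (G Mod center G) A" "a \<notin> A" using A1(3)
    using group.sub_in_normalizer[OF Qgrp A1(1)] by blast
  have a2: "a \<in> carrier (G Mod center G)" "cj (G Mod center G) a A = A"
    using a group.normalizer_iff[OF Qgrp Ac] by auto
  then obtain g where g: "g \<in> carrier G" "a = center G #> g" using Q_carrier by auto
  have Yc: "?Y \<subseteq> carrier G" using sY subgroup.subset by blast
  have "phiQ G (cj G g ?Y) = phiQ G ?Y" using phi_cj[OF g(1) Yc] a2 g phiY by simp
  hence "cj G g ?Y = ?Y"
    using phi_inj cj_sub[OF sY g(1)] cj_Zsub_iff[OF g(1) Yc] ZY sY by blast
  hence "g \<in> normalizer G ?Y" using normalizer_iff Yc g by auto
  moreover have "g \<notin> ?Y" using a g phiY unfolding phiQ_def by auto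
  ultimately have "normalizer G ?Y \<noteq> ?Y" by blast
  thus ?thesis using sY ZY nZ unfolding highS_def by auto
qed

lemma high_conj:
  assumes f: "finite (carrier G)" and DQ: "DD (G Mod center G) = 1"
    and Y1: "Y1 \<in> highS G" and Y2: "Y2 \<in> highS G"
  shows "\<exists>g\<in>carrier G. Y1 = cj G g Y2"
proof -
  let ?Q = "G Mod center G"
  have c1: "conj_class ?Q (phiQ G Y1) \<in> conj_class ?Q ` nsn_subgroups ?Q" using high_to_Q[OF Y1] by blast
  have c2: "conj_class ?Q (phiQ G Y2) \<in> conj_class ?Q ` nsn_subgroups ?Q" using high_to_Q[OF Y2] by blast
  have "card (conj_class ?Q ` nsn_subgroups ?Q) = 1" using DQ unfolding DD_def .
  then obtain c where "conj_class ?Q ` nsn_subgroups ?Q = {c}" using card_1_singletonE by blast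
  hence eq: "conj_class ?Q (phiQ G Y1) = conj_class ?Q (phiQ G Y2)" using c1 c2 by auto
  have s1: "subgroup Y1 G" "center G \<subseteq> Y1" and s2: "subgroup Y2 G" "center G \<subseteq> Y2"
    using Y1 Y2 unfolding highS_def by auto
  have Yc: "Y1 \<subseteq> carrier G" "Y2 \<subseteq> carrier G" using subgroup.subset[OF s1(1)] subgroup.subset[OF s2(1)] by auto
  obtain a where a: "a \<in> carrier ?Q" "phiQ G Y1 = cj ?Q a (phiQ G Y2)"
    using group.cc_eq_iff[OF Qgrp phi_carrier[OF Yc(1)] phi_carrier[OF Yc(2)]] eq by blast
  then obtain g where g: "g \<in> carrier G" "a = center G #> g" using Q_carrier by auto
  have "phiQ G Y1 = phiQ G (cj G g Y2)" using a g phi_cj Yc by simp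
  hence "Y1 = cj G g Y2"
    using phi_inj s1 cj_sub[OF s2(1) g(1)] cj_Zsub_iff[OF g(1) Yc(2)] s2 by blast
  thus ?thesis using g by blast
qed

lemma high_nonempty:
  assumes DQ: "DD (G Mod center G) = 1" shows "highS G \<noteq> {}"
proof -
  have "nsn_subgroups (G Mod center G) \<noteq> {}" using DQ unfolding DD_def by auto
  thus ?thesis using Q_to_high by blast
qed

end


context group begin

lemma reduction:
  assumes f: "finite (carrier G)"
    and h3: "int (DD G) - int (DD (G\<lparr>carrier := center G\<rparr>)) = 3"
    and hQ: "DD (G Mod center G) = 1"
  shows "center G \<noteq> carrier G" "center G \<noteq> {\<one>}" "mixedS G \<noteq> {}"
    "\<forall>Y1\<in>mixedS G. \<forall>Y2\<in>mixedS G. \<exists>g\<in>carrier G. Y1 = cj G g Y2"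
    "\<forall>Y1\<in>highS G. \<forall>Y2\<in>highS G. \<exists>g\<in>carrier G. Y1 = cj G g Y2"
proof -
  show ZG: "center G \<noteq> carrier G"
  proof
    assume ZG: "center G = carrier G"
    have cQ: "carrier (G Mod center G) = {center G}"
    proof -
      have "\<And>x. x \<in> carrier G \<Longrightarrow> center G #> x = center G"
        using coset_join2 center_sub ZG by blast
      thus ?thesis unfolding Q_carrier using one_closed by blast
    qed
    have "nsn_subgroups (G Mod center G) = {}"
    proof (rule ccontr)
      assume "nsn_subgroups (G Mod center G) \<noteq> {}"
      then obtain A where A: "subgroup A (G Mod center G)" "A \<noteq> {\<one>\<^bsub>G Mod center G\<^esub>}"
        unfolding nsn_subgroups_def by auto
      have "A \<subseteq> {center G}" using subgroup.subset[OF A(1)] cQ by simp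
      moreover have "center G \<in> A" using subgroup.one_closed[OF A(1)] by simp
      ultimately show False using A(2) by auto
    qed
    thus False using hQ unfolding DD_def by simp
  qed
  show "\<forall>Y1\<in>highS G. \<forall>Y2\<in>highS G. \<exists>g\<in>carrier G. Y1 = cj G g Y2"
    using high_conj[OF f hQ] by blast
  have hne: "highS G \<noteq> {}" using high_nonempty[OF hQ] .
  have ch: "card (conj_class G ` highS G) = 1"
  proof -
    obtain Y0 where Y0: "Y0 \<in> highS G" using hne by auto
    have "conj_class G ` highS G = {conj_class G Y0}"
    proof
      show "{conj_class G Y0} \<subseteq> conj_class G ` highS G" using Y0 by auto
      show "conj_class G ` highS G \<subseteq> {conj_class G Y0}"
      proof
        fix c assume "c \<in> conj_class G ` highS G"
        then obtain Y where Y: "Y \<in> highS G" "c = conj_class G Y" by auto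
        have sY: "Y \<subseteq> carrier G" "Y0 \<subseteq> carrier G"
          using Y(1) Y0 subgroup.subset unfolding highS_def by auto
        obtain g where "g \<in> carrier G" "Y = cj G g Y0" using high_conj[OF f hQ Y(1) Y0] by blast
        hence "conj_class G Y = conj_class G Y0" using cc_eq_iff[OF sY] by blast
        thus "c \<in> {conj_class G Y0}" using Y by simp
      qed
    qed
    thus ?thesis by simp
  qed
  have split: "DD G = card (lowS G) + 1 + card (conj_class G ` mixedS G)"
    using DD_split[OF f ZG] card_cc_low ch by simp
  have flow: "finite (lowS G)"
  proof -
    have "lowS G \<subseteq> Pow (carrier G)" unfolding lowS_def using subgroup.subset by auto
    thus ?thesis using f finite_subset finite_Pow_iff by blast
  qed
  have dz: "DD (G\<lparr>carrier := center G\<rparr>) = card (lowS G - {center G})" using DD_center .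
  have ge: "card (lowS G - {center G}) + 1 \<ge> card (lowS G)"
    using diff_card_le_card_Diff[of "{center G}" "lowS G"] by simp
  have cm_pos: "card (conj_class G ` mixedS G) \<ge> 1"
    using h3 split dz ge by linarith
  hence mne: "mixedS G \<noteq> {}" by auto
  thus "mixedS G \<noteq> {}" .
  show Z1: "center G \<noteq> {\<one>}"
  proof
    assume z: "center G = {\<one>}"
    obtain Y where Y: "Y \<in> mixedS G" using mne by auto
    hence "subgroup Y G" "\<not> center G \<subseteq> Y" unfolding mixedS_def by auto
    thus False using subgroup.one_closed z by auto
  qed
  have "center G \<in> lowS G" unfolding lowS_def using center_sub Z1 by auto
  hence "card (lowS G - {center G}) + 1 = card (lowS G)"
  proof -
    have "card (lowS G) > 0" using flow \<open>center G \<in> lowS G\<close> card_gt_0_iff by blast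
    thus ?thesis using flow \<open>center G \<in> lowS G\<close> by (simp add: card_Diff_singleton)
  qed
  hence cm: "card (conj_class G ` mixedS G) = 1" using h3 split dz by linarith
  show "\<forall>Y1\<in>mixedS G. \<forall>Y2\<in>mixedS G. \<exists>g\<in>carrier G. Y1 = cj G g Y2"
  proof (intro ballI)
    fix Y1 Y2 assume Y: "Y1 \<in> mixedS G" "Y2 \<in> mixedS G"
    obtain c where c: "conj_class G ` mixedS G = {c}" using cm card_1_singletonE by blast
    hence "conj_class G Y1 = c" "conj_class G Y2 = c" using Y by blast+
    hence "conj_class G Y1 = conj_class G Y2" by simp
    moreover have "Y1 \<subseteq> carrier G" "Y2 \<subseteq> carrier G" using Y subgroup.subset unfolding mixedS_def by auto
    ultimately show "\<exists>g\<in>carrier G. Y1 = cj G g Y2" using cc_eq_iff by blast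
  qed
qed

end


context group begin

lemma sub_dvd: "subgroup H G \<Longrightarrow> subgroup P G \<Longrightarrow> H \<subseteq> P \<Longrightarrow> finite P \<Longrightarrow> card H dvd card P"
proof -
  assume H: "subgroup H G" and P: "subgroup P G" and HP: "H \<subseteq> P" and f: "finite P"
  have g: "group (G\<lparr>carrier := P\<rparr>)" using subgroup_imp_group[OF P] .
  have s: "subgroup H (G\<lparr>carrier := P\<rparr>)" using subgroup_incl[OF H P HP] .
  have "card (rcosets\<^bsub>G\<lparr>carrier := P\<rparr>\<^esub> H) * card H = order (G\<lparr>carrier := P\<rparr>)"
    using group.lagrange[OF g s] .
  thus ?thesis unfolding order_def by (metis dvd_triv_right partial_object.select_convs(1) partial_object.surjective partial_object.update_convs(1))
qed

abbreviation "cact \<equiv> (\<lambda>g. \<lambda>W \<in> {W. W \<subseteq> carrier G}. g <# W #> inv g)"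

lemma cact_eq: "W \<subseteq> carrier G \<Longrightarrow> cact g W = cj G g W"
  by (simp add: conj_eq_cj)

lemma PG:
  assumes f: "finite (carrier G)" and P: "subgroup P G" and t: "Factorial_Ring.prime (t::nat)" and cP: "card P = t ^ n"
    and H: "subgroup H G" and HP: "H \<subseteq> P" and HneP: "H \<noteq> P"
  shows "\<exists>g\<in>P. g \<notin> H \<and> cj G g H = H"
proof (rule ccontr)
  assume nex: "\<not> (\<exists>g\<in>P. g \<notin> H \<and> cj G g H = H)"
  let ?E = "{W. W \<subseteq> carrier G}"
  have ActG: "group_action G ?E cact" using action_by_conjugation_on_power_set .
  have ActP: "group_action (G\<lparr>carrier := P\<rparr>) ?E cact" using group_action.induced_action[OF ActG P] .
  have ActH: "group_action (G\<lparr>carrier := H\<rparr>) ?E cact" using group_action.induced_action[OF ActG H] .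
  have Hc: "H \<subseteq> carrier G" using H subgroup.subset by blast
  have Pc: "P \<subseteq> carrier G" using P subgroup.subset by blast
  have fP: "finite P" using f Pc finite_subset by blast
  have fH: "finite H" using f Hc finite_subset by blast
  have stabH: "\<And>g. g \<in> P \<Longrightarrow> cj G g H = H \<Longrightarrow> g \<in> H" using nex by blast
  have Hstab: "\<And>h. h \<in> H \<Longrightarrow> cj G h H = H"
    using sub_in_normalizer[OF H] normalizer_iff[OF Hc] by blast
  have stP: "stabilizer (G\<lparr>carrier := P\<rparr>) cact H = H"
    unfolding stabilizer_def using Hc HP stabH Hstab by (auto simp: conj_eq_cj)
  define OP where "OP = orbit (G\<lparr>carrier := P\<rparr>) cact H"
  have OP_eq: "OP = (\<lambda>g. cj G g H) ` P"
    unfolding OP_def orbit_def using Hc by (auto simp: conj_eq_cj)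
  have os: "card OP * card H = card P"
    using group_action.orbit_stabilizer_theorem[OF ActP, of H] Hc stP unfolding OP_def order_def by simp
  obtain k where k: "k \<le> n" "card H = t ^ k"
    using sub_dvd[OF H P HP fP] cP divides_primepow_nat[OF t] by auto
  have "card H < card P" using HP HneP fP by (simp add: psubset_card_mono psubsetI)
  hence "k < n" using k cP t by (metis power_strict_increasing_iff prime_gt_1_nat)
  hence tdvd: "t dvd card OP"
  proof -
    have "card OP * t ^ k = t ^ (n - k) * t ^ k" using os k cP \<open>k < n\<close>
      by (simp add: power_add[symmetric])
    hence "card OP = t ^ (n - k)" using t by (simp add: prime_gt_0_nat)
    thus ?thesis using \<open>k < n\<close> by simp
  qed
  have OPsub: "OP \<subseteq> ?E" unfolding OP_eq using cj_carrier Pc Hc by auto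
  have fE: "finite ?E" using f by (simp add: Pow_def[symmetric] finite_Pow_iff)
  have fOP: "finite OP" using OPsub fE finite_subset by blast
  define orbH where "orbH W = orbit (G\<lparr>carrier := H\<rparr>) cact W" for W
  have orbH_eq: "W \<subseteq> carrier G \<Longrightarrow> orbH W = (\<lambda>h. cj G h W) ` H" for W
    unfolding orbH_def orbit_def using Hc by (auto simp: conj_eq_cj)
  have orb_in: "orbH W \<subseteq> OP" if W: "W \<in> OP" for W
  proof -
    obtain g where g: "g \<in> P" "W = cj G g H" using W OP_eq by auto
    have "\<And>h. h \<in> H \<Longrightarrow> cj G h W \<in> OP"
    proof -
      fix h assume h: "h \<in> H"
      have "h \<in> carrier G" "g \<in> carrier G" using g h Hc Pc by auto
      hence "cj G h W = cj G (h \<otimes> g) H" using g(2) Hc by (simp add: cj_comp)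
      moreover have "h \<in> P" using h HP by auto
      hence "h \<otimes> g \<in> P" using g(1) subgroup.m_closed[OF P] by simp
      ultimately show "cj G h W \<in> OP" unfolding OP_eq by (rule image_eqI)
    qed
    moreover have "W \<subseteq> carrier G" using W OPsub by auto
    ultimately show ?thesis using orbH_eq by auto
  qed
  have X_in_orb: "W \<in> orbH W" if "W \<subseteq> carrier G" for W
  proof -
    have "cj G \<one> W \<in> (\<lambda>h. cj G h W) ` H" using subgroup.one_closed[OF H] by (rule imageI)
    thus ?thesis using orbH_eq[OF that] cj_one[OF that] by simp
  qed
  have orb_card: "card (orbH W) dvd card H" if "W \<subseteq> carrier G" for W
  proof -
    have "card (orbH W) * card (stabilizer (G\<lparr>carrier := H\<rparr>) cact W) = card H"
      using group_action.orbit_stabilizer_theorem[OF ActH, of W] that unfolding orbH_def order_def by simp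
    hence "card H = card (orbH W) * card (stabilizer (G\<lparr>carrier := H\<rparr>) cact W)" by simp
    thus ?thesis by (rule dvdI)
  qed
  have orb_single: "W = H" if W: "W \<in> OP" and c1: "card (orbH W) = 1" for W
  proof -
    have Xc: "W \<subseteq> carrier G" using W OPsub by auto
    have "orbH W = {W}" using X_in_orb[OF Xc] c1 by (metis card_1_singletonE singletonD)
    hence fixX: "\<And>h. h \<in> H \<Longrightarrow> cj G h W = W" using orbH_eq[OF Xc] by auto
    obtain g where g: "g \<in> P" "W = cj G g H" using W OP_eq by auto
    have gc: "g \<in> carrier G" using g Pc by auto
    have inH: "inv g \<otimes> h \<otimes> g \<in> H" if h: "h \<in> H" for h
    proof -
      have hc: "h \<in> carrier G" using h Hc by auto
      have "cj G (inv g \<otimes> h \<otimes> g) H = cj G (inv g) (cj G h (cj G g H))"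
        using gc hc Hc by (simp add: cj_comp m_assoc)
      also have "\<dots> = H" using fixX[OF h] g gc Hc by (simp add: cj_inv)
      finally have "cj G (inv g \<otimes> h \<otimes> g) H = H" .
      moreover have "inv g \<otimes> h \<otimes> g \<in> P"
        using g h HP P by (meson subgroup.m_closed subgroup.m_inv_closed subsetD)
      ultimately show ?thesis using stabH by blast
    qed
    have "cj G (inv g) H \<subseteq> H"
    proof
      fix x assume "x \<in> cj G (inv g) H"
      then obtain h where "h \<in> H" "x = inv g \<otimes> h \<otimes> inv (inv g)" unfolding cj_def by auto
      thus "x \<in> H" using inH gc by simp
    qed
    moreover have "card (cj G (inv g) H) = card H" using cj_card gc Hc by simp
    ultimately have "cj G (inv g) H = H" using fH by (simp add: card_subset_eq)
    moreover have "inv g \<in> P" using subgroup.m_inv_closed[OF P g(1)] by simp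
    ultimately have "inv g \<in> H" using stabH by simp
    hence "inv (inv g) \<in> H" using subgroup.m_inv_closed[OF H] by simp
    hence "g \<in> H" using gc by simp
    thus "W = H" using g Hstab by simp
  qed
  define Orbs where "Orbs = orbH ` OP"
  have fO: "finite Orbs" unfolding Orbs_def using fOP by simp
  have UO: "\<Union>Orbs = OP" unfolding Orbs_def using orb_in X_in_orb OPsub by blast
  have orbs: "Orbs \<subseteq> orbits (G\<lparr>carrier := H\<rparr>) ?E cact"
    unfolding Orbs_def orbits_def orbH_def using OPsub by auto
  have disj: "pairwise disjnt Orbs"
    unfolding pairwise_def disjnt_def
    using group_action.disjoint_union[OF ActH] orbs by blast
  have fin_o: "\<And>oo. oo \<in> Orbs \<Longrightarrow> finite oo" using UO fOP by (meson Union_upper finite_subset)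
  have cOP: "card OP = sum card Orbs" using card_Union_disjoint[OF disj fin_o] UO by simp
  have HinOP: "H \<in> OP"
  proof -
    have "cj G \<one> H \<in> (\<lambda>g. cj G g H) ` P" using subgroup.one_closed[OF P] by (rule imageI)
    thus ?thesis unfolding OP_eq using cj_one[OF Hc] by simp
  qed
  have oH: "orbH H = {H}" using orbH_eq[OF Hc] Hstab subgroup.one_closed[OF H] by auto
  have HO: "{H} \<in> Orbs"
  proof -
    have "orbH H \<in> orbH ` OP" using HinOP by (rule imageI)
    thus ?thesis unfolding Orbs_def using oH by simp
  qed
  have rest: "t dvd card oo" if oo: "oo \<in> Orbs - {{H}}" for oo
  proof -
    obtain W where W: "W \<in> OP" "oo = orbH W" using oo Orbs_def by auto
    have Xc: "W \<subseteq> carrier G" using W OPsub by auto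
    obtain j where j: "card oo = t ^ j" using orb_card[OF Xc] W k divides_primepow_nat[OF t] by metis
    have "j \<noteq> 0"
    proof
      assume "j = 0"
      hence "card (orbH W) = 1" using j W by simp
      hence "W = H" using orb_single W by blast
      thus False using oo W oH by simp
    qed
    thus ?thesis using j by simp
  qed
  have "sum card Orbs = card {H} + sum card (Orbs - {{H}})" using fO HO by (simp add: sum.remove)
  hence "card OP = 1 + sum card (Orbs - {{H}})" using cOP by simp
  moreover have "t dvd sum card (Orbs - {{H}})" by (rule dvd_sum) (rule rest)
  ultimately have "t dvd sum card (Orbs - {{H}}) + 1" "t dvd sum card (Orbs - {{H}})" using tdvd by (simp_all add: add.commute)
  hence "t dvd 1" using dvd_add_right_iff by blast
  thus False using t by simp
qed

end


lemma one_prime_eq: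
  fixes n t :: nat
  assumes n: "n > 0" and t: "Factorial_Ring.prime t" and all: "\<And>p. Factorial_Ring.prime p \<Longrightarrow> p dvd n \<Longrightarrow> p = t"
  shows "n = t ^ multiplicity t n"
proof (rule dvd_antisym)
  show "t ^ multiplicity t n dvd n" by (rule multiplicity_dvd)
  show "n dvd t ^ multiplicity t n"
  proof (rule multiplicity_le_imp_dvd)
    show "n \<noteq> 0" using n by simp
    fix p :: nat assume p: "Factorial_Ring.prime p"
    show "multiplicity p n \<le> multiplicity p (t ^ multiplicity t n)"
    proof (cases "p = t")
      case True thus ?thesis using t by (simp add: prime_imp_prime_elem)
    next
      case False
      hence "\<not> p dvd n" using all p by blast
      thus ?thesis by (simp add: not_dvd_imp_multiplicity_0)
    qed
  qed
qed

lemma two_primes_eq: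
  fixes n r t :: nat
  assumes n: "n > 0" and r: "Factorial_Ring.prime r" and t: "Factorial_Ring.prime t" and rt: "r \<noteq> t"
    and all: "\<And>p. Factorial_Ring.prime p \<Longrightarrow> p dvd n \<Longrightarrow> p = r \<or> p = t"
  shows "n = r ^ multiplicity r n * t ^ multiplicity t n"
proof (rule dvd_antisym)
  have cop: "coprime (r ^ multiplicity r n) (t ^ multiplicity t n)"
  proof -
    have "coprime r t" using primes_coprime[OF r t rt] .
    thus ?thesis by (simp add: coprime_power_left_iff coprime_power_right_iff)
  qed
  show "r ^ multiplicity r n * t ^ multiplicity t n dvd n"
    by (rule divides_mult[OF multiplicity_dvd multiplicity_dvd cop])
  show "n dvd r ^ multiplicity r n * t ^ multiplicity t n"
  proof (rule multiplicity_le_imp_dvd)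
    show "n \<noteq> 0" using n by simp
    fix p :: nat assume p: "Factorial_Ring.prime p"
    have pe: "prime_elem r" "prime_elem t" using r t by (simp_all add: prime_imp_prime_elem)
    have nz: "r ^ multiplicity r n \<noteq> 0" "t ^ multiplicity t n \<noteq> 0" using r t by (simp_all add: prime_gt_0_nat)
    have m: "multiplicity p (r ^ multiplicity r n * t ^ multiplicity t n)
        = multiplicity p (r ^ multiplicity r n) + multiplicity p (t ^ multiplicity t n)"
      using prime_elem_multiplicity_mult_distrib[OF prime_imp_prime_elem[OF p] nz] .
    show "multiplicity p n \<le> multiplicity p (r ^ multiplicity r n * t ^ multiplicity t n)"
    proof (cases "p = r \<or> p = t")
      case True
      thus ?thesis using m pe by auto
    next
      case False
      hence "\<not> p dvd n" using all p by blast
      thus ?thesis by (simp add: not_dvd_imp_multiplicity_0)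
    qed
  qed
qed

lemma prime_pow_eq_prime:
  fixes r t :: nat
  assumes "Factorial_Ring.prime r" "Factorial_Ring.prime t" "r ^ a = t ^ b" "b \<ge> 1"
  shows "r = t"
proof -
  have "t dvd t ^ b" using assms(4) by (simp add: dvd_power)
  hence "t dvd r ^ a" using assms(3) by simp
  hence "t dvd r" using assms(2) prime_dvd_power by blast
  thus ?thesis using assms(1,2) primes_dvd_imp_eq by blast
qed

context group begin

lemma cyc_sub: "x \<in> carrier G \<Longrightarrow> subgroup (generate G {x}) G"
  by (rule generate_is_subgroup) simp

lemma cyc_in: "x \<in> carrier G \<Longrightarrow> x \<in> generate G {x}"
  by (simp add: generate.incl)

lemma cyc_le: "subgroup H G \<Longrightarrow> x \<in> H \<Longrightarrow> generate G {x} \<subseteq> H"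
  by (rule generate_subgroup_incl) auto

lemma cyc_card: "x \<in> carrier G \<Longrightarrow> card (generate G {x}) = ord x"
  by (simp add: generate_pow_card)

lemma cyc_elems: "finite (carrier G) \<Longrightarrow> x \<in> carrier G \<Longrightarrow> generate G {x} = {x [^] (k::nat) | k. True}"
  using generate_pow_on_finite_carrier by auto

lemma comm_pow: "x \<in> carrier G \<Longrightarrow> y \<in> carrier G \<Longrightarrow> x \<otimes> y = y \<otimes> x \<Longrightarrow> x [^] (k::nat) \<otimes> y = y \<otimes> x [^] k"
proof (induction k)
  case 0 thus ?case by simp
next
  case (Suc k)
  have "x [^] Suc k \<otimes> y = x [^] k \<otimes> (x \<otimes> y)" using Suc.prems by (simp add: m_assoc)
  also have "\<dots> = (x [^] k \<otimes> y) \<otimes> x" using Suc.prems by (simp add: m_assoc)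
  also have "\<dots> = y \<otimes> x [^] Suc k" using Suc by (simp add: m_assoc)
  finally show ?case .
qed

lemma comm_cyc: "finite (carrier G) \<Longrightarrow> x \<in> carrier G \<Longrightarrow> y \<in> carrier G \<Longrightarrow> x \<otimes> y = y \<otimes> x \<Longrightarrow>
   a \<in> generate G {x} \<Longrightarrow> a \<otimes> y = y \<otimes> a"
  using cyc_elems comm_pow by auto

lemma cyc_comm: "finite (carrier G) \<Longrightarrow> x \<in> carrier G \<Longrightarrow> a \<in> generate G {x} \<Longrightarrow> b \<in> generate G {x} \<Longrightarrow> a \<otimes> b = b \<otimes> a"
proof -
  assume f: "finite (carrier G)" and x: "x \<in> carrier G" and a: "a \<in> generate G {x}" and b: "b \<in> generate G {x}"
  obtain i j where ij: "a = x [^] (i::nat)" "b = x [^] (j::nat)" using cyc_elems[OF f x] a b by auto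
  show ?thesis using ij x by (simp add: nat_pow_mult add.commute)
qed

lemma set_mult_elem: "a \<in> A <#> B \<longleftrightarrow> (\<exists>x\<in>A. \<exists>y\<in>B. a = x \<otimes> y)"
  unfolding set_mult_def by auto

lemma comm_prod_sub:
  assumes A: "subgroup A G" and B: "subgroup B G" and c: "\<And>a b. a \<in> A \<Longrightarrow> b \<in> B \<Longrightarrow> a \<otimes> b = b \<otimes> a"
  shows "subgroup (A <#> B) G"
proof (rule subgroupI)
  have Ac: "A \<subseteq> carrier G" and Bc: "B \<subseteq> carrier G" using A B subgroup.subset by auto
  show "A <#> B \<subseteq> carrier G" using Ac Bc setmult_subset_G by blast
  have "\<one> \<otimes> \<one> \<in> A <#> B" using subgroup.one_closed[OF A] subgroup.one_closed[OF B] set_mult_elem by blast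
  thus "A <#> B \<noteq> {}" by auto
  fix u assume u: "u \<in> A <#> B"
  then obtain a b where ab: "a \<in> A" "b \<in> B" "u = a \<otimes> b" using set_mult_elem by auto
  have abc: "a \<in> carrier G" "b \<in> carrier G" using ab Ac Bc by auto
  have "inv u = inv b \<otimes> inv a" using ab abc by (simp add: inv_mult_group)
  also have "\<dots> = inv a \<otimes> inv b" using c[OF subgroup.m_inv_closed[OF A ab(1)] subgroup.m_inv_closed[OF B ab(2)]] by simp
  finally show "inv u \<in> A <#> B"
    using subgroup.m_inv_closed[OF A ab(1)] subgroup.m_inv_closed[OF B ab(2)] set_mult_elem by blast
next
  have Ac: "A \<subseteq> carrier G" and Bc: "B \<subseteq> carrier G" using A B subgroup.subset by auto
  fix u v assume u: "u \<in> A <#> B" and v: "v \<in> A <#> B"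
  then obtain a b a' b' where ab: "a \<in> A" "b \<in> B" "u = a \<otimes> b" "a' \<in> A" "b' \<in> B" "v = a' \<otimes> b'"
    using set_mult_elem by metis
  have abc: "a \<in> carrier G" "b \<in> carrier G" "a' \<in> carrier G" "b' \<in> carrier G" using ab Ac Bc by auto
  have "u \<otimes> v = a \<otimes> (b \<otimes> a') \<otimes> b'" using ab abc by (simp add: m_assoc)
  also have "\<dots> = a \<otimes> (a' \<otimes> b) \<otimes> b'" using c[OF ab(4) ab(2)] by simp
  also have "\<dots> = (a \<otimes> a') \<otimes> (b \<otimes> b')" using abc by (simp add: m_assoc)
  finally show "u \<otimes> v \<in> A <#> B"
    using subgroup.m_closed[OF A ab(1) ab(4)] subgroup.m_closed[OF B ab(2) ab(5)] set_mult_elem by blast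
qed

lemma prod_left: "subgroup B G \<Longrightarrow> A \<subseteq> carrier G \<Longrightarrow> A \<subseteq> A <#> B"
proof
  fix a assume B: "subgroup B G" and A: "A \<subseteq> carrier G" and a: "a \<in> A"
  have "a = a \<otimes> \<one>" using a A by auto
  thus "a \<in> A <#> B" using a subgroup.one_closed[OF B] set_mult_elem by blast
qed

lemma prod_right: "subgroup A G \<Longrightarrow> B \<subseteq> carrier G \<Longrightarrow> B \<subseteq> A <#> B"
proof
  fix b assume A: "subgroup A G" and B: "B \<subseteq> carrier G" and b: "b \<in> B"
  have "b = \<one> \<otimes> b" using b B by auto
  thus "b \<in> A <#> B" using b subgroup.one_closed[OF A] set_mult_elem by blast
qed

lemma card_prod:
  assumes f: "finite (carrier G)" and A: "subgroup A G" and B: "subgroup B G" and AB: "A \<inter> B = {\<one>}"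
  shows "card (A <#> B) = card A * card B"
proof -
  have Ac: "A \<subseteq> carrier G" and Bc: "B \<subseteq> carrier G" using A B subgroup.subset by auto
  have eq: "A <#> B = (\<lambda>(a, b). a \<otimes> b) ` (A \<times> B)" unfolding set_mult_def by auto
  have "inj_on (\<lambda>(a, b). a \<otimes> b) (A \<times> B)"
  proof (rule inj_onI, clarify)
    fix a b a' b' assume ab: "a \<in> A" "b \<in> B" "a' \<in> A" "b' \<in> B" and e: "a \<otimes> b = a' \<otimes> b'"
    have abc: "a \<in> carrier G" "b \<in> carrier G" "a' \<in> carrier G" "b' \<in> carrier G" using ab Ac Bc by auto
    have "inv a' \<otimes> a = b' \<otimes> inv b"
    proof -
      have "inv a' \<otimes> (a \<otimes> b) \<otimes> inv b = inv a' \<otimes> (a' \<otimes> b') \<otimes> inv b" using e by simp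
      thus ?thesis using abc by (simp add: m_assoc)
    qed
    moreover have "inv a' \<otimes> a \<in> A" using ab subgroup.m_closed[OF A] subgroup.m_inv_closed[OF A] by simp
    moreover have "b' \<otimes> inv b \<in> B" using ab subgroup.m_closed[OF B] subgroup.m_inv_closed[OF B] by simp
    ultimately have e1: "inv a' \<otimes> a = \<one>" "b' \<otimes> inv b = \<one>" using AB by auto
    have "a = a' \<otimes> (inv a' \<otimes> a)" using abc by simp
    hence "a = a'" using e1 abc by simp
    moreover have "b' = (b' \<otimes> inv b) \<otimes> b" using abc by simp
    hence "b = b'" using e1 abc by simp
    ultimately have "a = a'" "b = b'" by auto
    thus "a = a' \<and> b = b'" by simp
  qed
  hence "card (A <#> B) = card (A \<times> B)" unfolding eq by (rule card_image)
  thus ?thesis by (simp add: card_cartesian_product)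
qed

lemma cauchy_pp:
  assumes f: "finite (carrier G)" and S: "subgroup S G" and p: "Factorial_Ring.prime (p::nat)"
    and cS: "card S = p ^ c" and c: "c \<ge> 1"
  shows "\<exists>W. subgroup W G \<and> W \<subseteq> S \<and> card W = p"
proof -
  have Sc: "S \<subseteq> carrier G" using S subgroup.subset by auto
  have p1: "p > 1" using prime_gt_1_nat[OF p] .
  have "p \<le> p ^ c" using c p1 by (simp add: self_le_power)
  hence cS1: "card S > 1" using cS p1 by simp
  obtain s where s: "s \<in> S" "s \<noteq> \<one>"
  proof (rule ccontr)
    assume "\<not> thesis"
    hence "\<And>s. s \<in> S \<Longrightarrow> s = \<one>" using that by blast
    hence "S \<subseteq> {\<one>}" by auto
    hence "card S \<le> 1" using card_mono[of "{\<one>}" S] by simp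
    thus False using cS1 by simp
  qed
  have sc: "s \<in> carrier G" using s Sc by auto
  have "ord s dvd p ^ c" using sub_dvd[OF cyc_sub[OF sc] S cyc_le[OF S s(1)]] cS cyc_card[OF sc] finite_subset[OF Sc f] by simp
  then obtain j where j: "j \<le> c" "ord s = p ^ j" using divides_primepow_nat[OF p] by auto
  have "j \<noteq> 0"
  proof
    assume "j = 0"
    hence "ord s = 1" using j by simp
    thus False using ord_eq_1[OF sc] s by simp
  qed
  define w where "w = s [^] (p ^ (j - 1))"
  have wc: "w \<in> carrier G" unfolding w_def using sc by simp
  have "p ^ (j - 1) dvd ord s" using j \<open>j \<noteq> 0\<close> by (simp add: le_imp_power_dvd)
  hence "ord w = ord s div p ^ (j - 1)" unfolding w_def using ord_pow[OF sc] p by (simp add: prime_gt_0_nat)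
  also have "\<dots> = p"
  proof -
    have "p ^ j = p ^ (j - 1) * p" using \<open>j \<noteq> 0\<close> by (cases j) auto
    moreover have "p ^ (j - 1) > 0" using p1 by simp
    ultimately show ?thesis using j by simp
  qed
  finally have ow: "ord w = p" .
  have "w \<in> generate G {s}" unfolding w_def using cyc_elems[OF f sc] by blast
  hence "w \<in> S" using cyc_le[OF S s(1)] by blast
  thus ?thesis using cyc_sub[OF wc] cyc_le[OF S] cyc_card[OF wc] ow by blast
qed

lemma pow_cj: "g \<in> carrier G \<Longrightarrow> a \<in> carrier G \<Longrightarrow> (g \<otimes> a \<otimes> inv g) [^] (n::nat) = g \<otimes> a [^] n \<otimes> inv g"
proof (induction n)
  case 0 thus ?case by simp
next
  case (Suc n)
  have "(g \<otimes> a \<otimes> inv g) [^] Suc n = (g \<otimes> a [^] n \<otimes> inv g) \<otimes> (g \<otimes> a \<otimes> inv g)" using Suc by simp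
  also have "\<dots> = g \<otimes> (a [^] n \<otimes> a) \<otimes> inv g" using Suc.prems by (simp add: m_assoc)
  finally show ?case by (simp add: nat_pow_Suc)
qed

lemma pow_eq_cong: "x \<in> carrier G \<Longrightarrow> ord x = r \<Longrightarrow> x [^] (a::nat) = x [^] (b::nat) \<longleftrightarrow> [a = b] (mod r)"
proof -
  assume x: "x \<in> carrier G" and o: "ord x = r"
  have "x [^] a = x [^] b \<longleftrightarrow> x [^] (int a) = x [^] (int b)" by (simp add: int_pow_int)
  also have "\<dots> \<longleftrightarrow> int r dvd (int b - int a)" using int_pow_eq[OF x] o by simp
  also have "\<dots> \<longleftrightarrow> [int a = int b] (mod int r)" by (simp add: cong_iff_dvd_diff dvd_diff_commute)
  also have "\<dots> \<longleftrightarrow> [a = b] (mod r)" by (simp add: cong_int_iff)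
  finally show ?thesis .
qed

end


locale MT = group G for G (structure) +
  assumes fin: "finite (carrier G)"
  and ZG: "center G \<noteq> carrier G"
  and Z1: "center G \<noteq> {\<one>}"
  and mne: "mixedS G \<noteq> {}"
  and mconj: "\<And>Y1 Y2. Y1 \<in> mixedS G \<Longrightarrow> Y2 \<in> mixedS G \<Longrightarrow> \<exists>g\<in>carrier G. Y1 = cj G g Y2"
  and hconj: "\<And>Y1 Y2. Y1 \<in> highS G \<Longrightarrow> Y2 \<in> highS G \<Longrightarrow> \<exists>g\<in>carrier G. Y1 = cj G g Y2"
begin

lemma Zs: "subgroup (center G) G" by (rule center_sub)
lemma Zc: "center G \<subseteq> carrier G" using subgroup.subset[OF Zs] .
lemma fZ: "finite (center G)" using finite_subset[OF Zc fin] .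
lemma sub_fin: "subgroup Y G \<Longrightarrow> finite Y" using finite_subset[OF subgroup.subset fin] by blast
lemma sub_c: "subgroup Y G \<Longrightarrow> Y \<subseteq> carrier G" using subgroup.subset by blast

lemma mixedI: "subgroup Y G \<Longrightarrow> \<not> Y \<subseteq> center G \<Longrightarrow> \<not> center G \<subseteq> Y \<Longrightarrow> Y \<in> mixedS G"
  unfolding mixedS_def by simp

lemma mixedD: "Y \<in> mixedS G \<Longrightarrow> subgroup Y G \<and> \<not> Y \<subseteq> center G \<and> \<not> center G \<subseteq> Y"
  unfolding mixedS_def by simp

lemma highI: "subgroup Y G \<Longrightarrow> center G \<subseteq> Y \<Longrightarrow> \<not> Y \<subseteq> center G \<Longrightarrow> normalizer G Y \<noteq> Y \<Longrightarrow> Y \<in> highS G"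
  unfolding highS_def by simp

lemma mixed_card: "Y1 \<in> mixedS G \<Longrightarrow> Y2 \<in> mixedS G \<Longrightarrow> card Y1 = card Y2"
proof -
  assume Y: "Y1 \<in> mixedS G" "Y2 \<in> mixedS G"
  obtain g where g: "g \<in> carrier G" "Y1 = cj G g Y2" using mconj[OF Y] by blast
  show ?thesis using g cj_card sub_c mixedD[OF Y(2)] by simp
qed

lemma high_card: "Y1 \<in> highS G \<Longrightarrow> Y2 \<in> highS G \<Longrightarrow> card Y1 = card Y2"
proof -
  assume Y: "Y1 \<in> highS G" "Y2 \<in> highS G"
  obtain g where g: "g \<in> carrier G" "Y1 = cj G g Y2" using hconj[OF Y] by blast
  have "subgroup Y2 G" using Y(2) unfolding highS_def by simp
  thus ?thesis using g cj_card sub_c by simp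
qed

lemma m2: assumes Y: "Y \<in> mixedS G" and Y': "subgroup Y' G" "Y' \<subseteq> Y" "\<not> Y' \<subseteq> center G"
  shows "Y' = Y"
proof -
  have "\<not> center G \<subseteq> Y'" using mixedD[OF Y] Y'(2) by blast
  hence "Y' \<in> mixedS G" using mixedI Y' by blast
  hence "card Y' = card Y" using mixed_card Y by blast
  thus ?thesis using card_subset_eq[OF sub_fin[OF conjunct1[OF mixedD[OF Y]]] Y'(2)] by simp
qed

lemma central_comm: "z \<in> center G \<Longrightarrow> g \<in> carrier G \<Longrightarrow> g \<otimes> z = z \<otimes> g"
  using center_comm by simp

lemma AZ_sub: "x \<in> carrier G \<Longrightarrow> subgroup (generate G {x} <#> center G) G"
proof -
  assume x: "x \<in> carrier G"
  show ?thesis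
  proof (rule comm_prod_sub[OF cyc_sub[OF x] Zs])
    fix a b assume a: "a \<in> generate G {x}" and b: "b \<in> center G"
    have "a \<in> carrier G" using a sub_c[OF cyc_sub[OF x]] by auto
    thus "a \<otimes> b = b \<otimes> a" using central_comm[OF b] by simp
  qed
qed

lemma AZ_Z: "x \<in> carrier G \<Longrightarrow> center G \<subseteq> generate G {x} <#> center G"
  using prod_right[OF cyc_sub Zc] by blast

lemma AZ_x: "x \<in> carrier G \<Longrightarrow> x \<in> generate G {x} <#> center G"
  using prod_left[OF Zs sub_c[OF cyc_sub]] cyc_in by blast

lemma prod_Z_comm:
  assumes A: "subgroup A G" and Ac: "\<And>a b. a \<in> A \<Longrightarrow> b \<in> A \<Longrightarrow> a \<otimes> b = b \<otimes> a"
    and u: "u \<in> A <#> center G" and v: "v \<in> A <#> center G"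
  shows "u \<otimes> v = v \<otimes> u"
proof -
  obtain a z where az: "a \<in> A" "z \<in> center G" "u = a \<otimes> z" using u set_mult_elem by blast
  obtain b w where bw: "b \<in> A" "w \<in> center G" "v = b \<otimes> w" using v set_mult_elem by blast
  have c: "a \<in> carrier G" "b \<in> carrier G" "z \<in> carrier G" "w \<in> carrier G"
    using az bw sub_c[OF A] Zc by auto
  have "u \<otimes> v = a \<otimes> (z \<otimes> b) \<otimes> w" using az bw c by (simp add: m_assoc)
  also have "\<dots> = a \<otimes> (b \<otimes> z) \<otimes> w" using central_comm[OF az(2) c(2)] by simp
  also have "\<dots> = (a \<otimes> b) \<otimes> (z \<otimes> w)" using c by (simp add: m_assoc)
  also have "\<dots> = (b \<otimes> a) \<otimes> (w \<otimes> z)" using Ac[OF az(1) bw(1)] central_comm[OF az(2) c(4)] by simp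
  also have "\<dots> = b \<otimes> (a \<otimes> w) \<otimes> z" using c by (simp add: m_assoc)
  also have "\<dots> = b \<otimes> (w \<otimes> a) \<otimes> z" using central_comm[OF bw(2) c(1)] by simp
  also have "\<dots> = v \<otimes> u" using az bw c by (simp add: m_assoc)
  finally show ?thesis .
qed

lemma AZ_comm: "x \<in> carrier G \<Longrightarrow> u \<in> generate G {x} <#> center G \<Longrightarrow> v \<in> generate G {x} <#> center G \<Longrightarrow> u \<otimes> v = v \<otimes> u"
  using prod_Z_comm[OF cyc_sub] cyc_comm[OF fin] by blast

lemma comm_not_all: "subgroup A G \<Longrightarrow> (\<And>a b. a \<in> A \<Longrightarrow> b \<in> A \<Longrightarrow> a \<otimes> b = b \<otimes> a) \<Longrightarrow> A \<noteq> carrier G"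
proof
  assume A: "subgroup A G" and c: "\<And>a b. a \<in> A \<Longrightarrow> b \<in> A \<Longrightarrow> a \<otimes> b = b \<otimes> a" and e: "A = carrier G"
  have "carrier G \<subseteq> center G" unfolding center_def using c e by auto
  thus False using ZG Zc by auto
qed

lemma AZ_ne: "x \<in> carrier G \<Longrightarrow> generate G {x} <#> center G \<noteq> carrier G"
  using comm_not_all[OF AZ_sub] AZ_comm by blast

lemma exists_noncentral: "\<exists>x\<in>carrier G. x \<notin> center G"
  using ZG Zc by auto

lemma lagZ: "card (rcosets (center G)) * card (center G) = card (carrier G)"
  using lagrange[OF Zs] unfolding order_def .

lemma z_pos: "card (center G) > 0" using fZ subgroup.one_closed[OF Zs] card_gt_0_iff by blast
lemma n_pos: "card (carrier G) > 0" using fin card_gt_0_iff by blast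
lemma qn_pos: "card (rcosets (center G)) > 0" using lagZ n_pos by (metis gr0I mult_0)

lemma z_gt1: "card (center G) > 1"
proof -
  have "center G \<noteq> {}" using subgroup.one_closed[OF Zs] by auto
  moreover have "\<not> card (center G) = 1"
  proof
    assume "card (center G) = 1"
    then obtain a where "center G = {a}" using card_1_singletonE by blast
    thus False using Z1 subgroup.one_closed[OF Zs] by auto
  qed
  ultimately show ?thesis using fZ card_gt_0_iff by (metis less_one nat_neq_iff)
qed

lemma qn_gt1: "card (rcosets (center G)) > 1"
proof -
  have "card (rcosets (center G)) \<noteq> 1"
  proof
    assume "card (rcosets (center G)) = 1"
    hence "card (center G) = card (carrier G)" using lagZ by simp
    hence "center G = carrier G" using card_subset_eq[OF fin Zc] by simp
    thus False using ZG by simp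
  qed
  thus ?thesis using qn_pos by simp
qed

lemma qn_not_prime: "\<not> Factorial_Ring.prime (card (rcosets (center G)))"
proof
  assume p: "Factorial_Ring.prime (card (rcosets (center G)))"
  obtain x where x: "x \<in> carrier G" "x \<notin> center G" using exists_noncentral by blast
  let ?A = "generate G {x} <#> center G"
  have sA: "subgroup ?A G" using AZ_sub[OF x(1)] .
  have d1: "card (center G) dvd card ?A" using sub_dvd[OF Zs sA AZ_Z[OF x(1)] sub_fin[OF sA]] .
  have d2: "card ?A dvd card (carrier G)" using sub_dvd[OF sA subgroup_self sub_c[OF sA] fin] .
  obtain m where m: "card ?A = card (center G) * m" using d1 by blast
  have "card (center G) * m dvd card (center G) * card (rcosets (center G))" using d2 m lagZ by (simp add: mult.commute)
  hence "m dvd card (rcosets (center G))" using z_pos by simp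
  hence "m = 1 \<or> m = card (rcosets (center G))" using p prime_nat_iff by blast
  thus False
  proof
    assume "m = 1"
    hence "card ?A = card (center G)" using m by simp
    hence "center G = ?A" using card_subset_eq[OF sub_fin[OF sA] AZ_Z[OF x(1)]] by simp
    thus False using x AZ_x by blast
  next
    assume "m = card (rcosets (center G))"
    hence "card ?A = card (carrier G)" using m lagZ by (simp add: mult.commute)
    hence "?A = carrier G" using card_subset_eq[OF fin sub_c[OF sA]] by simp
    thus False using AZ_ne[OF x(1)] by simp
  qed
qed

lemma sylow_ex: "Factorial_Ring.prime t \<Longrightarrow> \<exists>R. subgroup R G \<and> card R = t ^ multiplicity t (card (carrier G))"
proof -
  assume t: "Factorial_Ring.prime t"
  let ?a = "multiplicity t (card (carrier G))"
  obtain m where m: "card (carrier G) = t ^ ?a * m" using multiplicity_dvd by blast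
  have "order G = t ^ ?a * m" using m unfolding order_def .
  thus ?thesis using sylow_thm[OF t is_group _ fin] by blast
qed

lemma mult_split: "Factorial_Ring.prime t \<Longrightarrow>
  multiplicity t (card (carrier G)) = multiplicity t (card (center G)) + multiplicity t (card (rcosets (center G)))"
proof -
  assume t: "Factorial_Ring.prime t"
  have "multiplicity t (card (center G) * card (rcosets (center G))) =
     multiplicity t (card (center G)) + multiplicity t (card (rcosets (center G)))"
    using prime_elem_multiplicity_mult_distrib[OF prime_imp_prime_elem[OF t]] z_pos qn_pos by simp
  thus ?thesis using lagZ by (simp add: mult.commute)
qed

lemma syl_notZ:
  assumes t: "Factorial_Ring.prime t" and tq: "t dvd card (rcosets (center G))"
    and R: "subgroup R G" "card R = t ^ multiplicity t (card (carrier G))"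
  shows "\<not> R \<subseteq> center G"
proof
  assume RZ: "R \<subseteq> center G"
  have "card R dvd card (center G)" using sub_dvd[OF R(1) Zs RZ fZ] .
  have "multiplicity t (card (carrier G)) \<le> multiplicity t (card (center G))"
  proof (rule multiplicity_geI)
    show "card (center G) \<noteq> 0" using z_pos by simp
    show "\<not> is_unit t" using t not_prime_unit by blast
    show "t ^ multiplicity t (card (carrier G)) dvd card (center G)" using \<open>card R dvd card (center G)\<close> R(2) by simp
  qed
  moreover have "multiplicity t (card (rcosets (center G))) > 0"
    using prime_multiplicity_gt_zero_iff[OF prime_imp_prime_elem[OF t]] tq qn_pos by simp
  ultimately show False using mult_split[OF t] by simp
qed

lemma caseP:
  assumes t: "Factorial_Ring.prime t" and n: "card (carrier G) = t ^ k"
  shows False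
proof -
  have PGG: "\<And>H. subgroup H G \<Longrightarrow> H \<noteq> carrier G \<Longrightarrow> normalizer G H \<noteq> H"
  proof -
    fix H assume H: "subgroup H G" "H \<noteq> carrier G"
    obtain g where g: "g \<in> carrier G" "g \<notin> H" "cj G g H = H"
      using PG[OF fin subgroup_self t n H(1) sub_c[OF H(1)] H(2)] by blast
    hence "g \<in> normalizer G H" using normalizer_iff[OF sub_c[OF H(1)]] by simp
    thus "normalizer G H \<noteq> H" using g by blast
  qed
  obtain x where x: "x \<in> carrier G" "x \<notin> center G" using exists_noncentral by blast
  let ?A = "generate G {x} <#> center G"
  have sA: "subgroup ?A G" using AZ_sub[OF x(1)] .
  have Ahigh: "?A \<in> highS G"
    using highI[OF sA AZ_Z[OF x(1)]] AZ_x[OF x(1)] x(2) PGG[OF sA AZ_ne[OF x(1)]] by blast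
  define N where "N = normalizer G ?A"
  have sN: "subgroup N G" unfolding N_def using normalizer_imp_subgroup[OF sub_c[OF sA]] .
  have AN: "?A \<subseteq> N" unfolding N_def using sub_in_normalizer[OF sA] .
  have NA: "N \<noteq> ?A" unfolding N_def using PGG[OF sA AZ_ne[OF x(1)]] .
  have Nall: "N = carrier G"
  proof (rule ccontr)
    assume "N \<noteq> carrier G"
    hence "N \<in> highS G"
      using highI[OF sN] AZ_Z[OF x(1)] AN AZ_x[OF x(1)] x(2) PGG[OF sN] by blast
    hence "card N = card ?A" using high_card Ahigh by blast
    hence "N = ?A" using card_subset_eq[OF sub_fin[OF sN] AN] by simp
    thus False using NA by simp
  qed
  obtain y where y: "y \<in> carrier G" "y \<notin> ?A" using AZ_ne[OF x(1)] sub_c[OF sA] by blast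
  let ?B = "generate G {y} <#> center G"
  have sB: "subgroup ?B G" using AZ_sub[OF y(1)] .
  have yZ: "y \<notin> center G" using y AZ_Z[OF x(1)] by blast
  have Bhigh: "?B \<in> highS G"
    using highI[OF sB AZ_Z[OF y(1)]] AZ_x[OF y(1)] yZ PGG[OF sB AZ_ne[OF y(1)]] by blast
  obtain h where h: "h \<in> carrier G" "?B = cj G h ?A" using hconj[OF Bhigh Ahigh] by blast
  have "cj G h ?A = ?A" using h(1) Nall normalizer_iff[OF sub_c[OF sA]] unfolding N_def by blast
  hence "?B = ?A" using h by simp
  thus False using y AZ_x[OF y(1)] by blast
qed

end


context MT begin

lemma mixed_gen: "M \<in> mixedS G \<Longrightarrow> \<exists>y\<in>M. y \<notin> center G \<and> generate G {y} = M"
proof -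
  assume M: "M \<in> mixedS G"
  have sM: "subgroup M G" using mixedD[OF M] by simp
  obtain y where y: "y \<in> M" "y \<notin> center G" using mixedD[OF M] by blast
  have yc: "y \<in> carrier G" using y sub_c[OF sM] by auto
  have "generate G {y} = M"
    using m2[OF M cyc_sub[OF yc] cyc_le[OF sM y(1)]] cyc_in[OF yc] y(2) by blast
  thus ?thesis using y by blast
qed

lemma pow_in_cyc: "x \<in> carrier G \<Longrightarrow> x [^] (k::nat) \<in> generate G {x}"
  using cyc_elems[OF fin] by blast

lemma int_eq_one: "subgroup A G \<Longrightarrow> subgroup B G \<Longrightarrow> card (A \<inter> B) = 1 \<Longrightarrow> A \<inter> B = {\<one>}"
proof -
  assume A: "subgroup A G" and B: "subgroup B G" and c: "card (A \<inter> B) = 1"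
  have "\<one> \<in> A \<inter> B" using subgroup.one_closed[OF A] subgroup.one_closed[OF B] by simp
  thus ?thesis using c by (metis card_1_singletonE singletonD)
qed

lemma Zt_lemma:
  assumes R: "subgroup R G" "R \<in> mixedS G" "Factorial_Ring.prime r" "card R = r ^ multiplicity r (card (carrier G))"
    and t: "Factorial_Ring.prime t" "t dvd card (rcosets (center G))" "t \<noteq> r"
  shows "\<exists>c. card (center G) = t ^ c"
proof -
  obtain R' where R': "subgroup R' G" "card R' = t ^ multiplicity t (card (carrier G))" using sylow_ex[OF t(1)] by blast
  have nZ: "\<not> R' \<subseteq> center G" using syl_notZ[OF t(1,2) R'] .
  have b1: "multiplicity t (card (carrier G)) \<ge> 1"
  proof -
    have "t dvd card (carrier G)" using t(2) lagZ by (metis dvd_mult2)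
    hence "0 < multiplicity t (card (carrier G))"
      using prime_multiplicity_gt_zero_iff[OF prime_imp_prime_elem[OF t(1)], of "card (carrier G)"] n_pos by simp
    thus ?thesis by simp
  qed
  have "center G \<subseteq> R'"
  proof (rule ccontr)
    assume "\<not> center G \<subseteq> R'"
    hence "R' \<in> mixedS G" using mixedI[OF R'(1) nZ] by simp
    hence "card R' = card R" using mixed_card R(2) by blast
    hence "r ^ multiplicity r (card (carrier G)) = t ^ multiplicity t (card (carrier G))" using R(4) R'(2) by simp
    hence "r = t" using prime_pow_eq_prime[OF R(3) t(1) _ b1] by simp
    thus False using t(3) by simp
  qed
  hence "card (center G) dvd t ^ multiplicity t (card (carrier G))" using sub_dvd[OF Zs R'(1) _ sub_fin[OF R'(1)]] R'(2) by simp
  thus ?thesis using divides_primepow_nat[OF t(1)] by blast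
qed

lemma main_structure:
  "\<exists>K r t \<gamma>. K \<in> mixedS G \<and> Factorial_Ring.prime r \<and> Factorial_Ring.prime t \<and> r \<noteq> t \<and> card K = r
     \<and> card (center G) = t \<and> K \<inter> center G = {\<one>} \<and> card (carrier G) = r * t ^ \<gamma> \<and> \<gamma> \<ge> 2"
proof (cases "\<exists>r R. Factorial_Ring.prime r \<and> r dvd card (rcosets (center G)) \<and> subgroup R G
      \<and> card R = r ^ multiplicity r (card (carrier G)) \<and> \<not> center G \<subseteq> R")
  case False
  obtain t where t: "Factorial_Ring.prime t" "t dvd card (rcosets (center G))"
    using prime_factor_nat qn_gt1 by (metis less_irrefl)
  have allZ: "\<And>p R. Factorial_Ring.prime p \<Longrightarrow> p dvd card (rcosets (center G)) \<Longrightarrow> subgroup R G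
      \<Longrightarrow> card R = p ^ multiplicity p (card (carrier G)) \<Longrightarrow> center G \<subseteq> R"
    using False by blast
  have zpow: "\<And>p. Factorial_Ring.prime p \<Longrightarrow> p dvd card (rcosets (center G)) \<Longrightarrow> \<exists>c. card (center G) = p ^ c"
  proof -
    fix p assume p: "Factorial_Ring.prime p" "p dvd card (rcosets (center G))"
    obtain R where R: "subgroup R G" "card R = p ^ multiplicity p (card (carrier G))" using sylow_ex[OF p(1)] by blast
    have "center G \<subseteq> R" using allZ[OF p R] .
    hence "card (center G) dvd p ^ multiplicity p (card (carrier G))" using sub_dvd[OF Zs R(1) _ sub_fin[OF R(1)]] R(2) by simp
    thus "\<exists>c. card (center G) = p ^ c" using divides_primepow_nat[OF p(1)] by blast
  qed
  obtain c where c: "card (center G) = t ^ c" using zpow[OF t] by blast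
  have c1: "c \<ge> 1" using c z_gt1 by (cases c) auto
  have tz: "t dvd card (center G)" using c c1 by (simp add: dvd_power)
  have "\<And>p. Factorial_Ring.prime p \<Longrightarrow> p dvd card (carrier G) \<Longrightarrow> p = t"
  proof (rule ccontr)
    fix p assume p: "Factorial_Ring.prime p" "p dvd card (carrier G)" "p \<noteq> t"
    have "\<not> p dvd card (center G)"
    proof
      assume "p dvd card (center G)"
      hence "p dvd t" using c p(1) prime_dvd_power by (metis)
      thus False using p(1,3) t(1) primes_dvd_imp_eq by blast
    qed
    hence pq: "p dvd card (rcosets (center G))" using p(1,2) lagZ prime_dvd_mult_iff by metis
    obtain c' where c': "card (center G) = p ^ c'" using zpow[OF p(1) pq] by blast
    hence "t dvd p ^ c'" using tz by simp
    hence "t dvd p" using t(1) prime_dvd_power by metis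
    thus False using p(1,3) t(1) primes_dvd_imp_eq by metis
  qed
  hence "card (carrier G) = t ^ multiplicity t (card (carrier G))" using one_prime_eq[OF n_pos t(1)] by blast
  thus ?thesis using caseP[OF t(1)] by blast
next
  case True
  then obtain r R where rR: "Factorial_Ring.prime r" "r dvd card (rcosets (center G))" "subgroup R G"
    "card R = r ^ multiplicity r (card (carrier G))" "\<not> center G \<subseteq> R" by blast
  define \<alpha> where "\<alpha> = multiplicity r (card (carrier G))"
  have Rm: "R \<in> mixedS G" using mixedI[OF rR(3) syl_notZ[OF rR(1,2,3,4)] rR(5)] .
  have a1: "\<alpha> \<ge> 1"
  proof -
    have "r dvd card (carrier G)" using rR(2) lagZ by (metis dvd_mult2)
    hence "0 < multiplicity r (card (carrier G))"
      using prime_multiplicity_gt_zero_iff[OF prime_imp_prime_elem[OF rR(1)], of "card (carrier G)"] n_pos by simp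
    thus ?thesis unfolding \<alpha>_def by simp
  qed
  obtain y where y: "y \<in> R" "y \<notin> center G" "generate G {y} = R" using mixed_gen[OF Rm] by blast
  have yc: "y \<in> carrier G" using y(1) sub_c[OF rR(3)] by auto
  have oy: "ord y = r ^ \<alpha>" using cyc_card[OF yc] y(3) rR(4) unfolding \<alpha>_def by simp
  define w where "w = y [^] r"
  have wc: "w \<in> carrier G" unfolding w_def using yc by simp
  have ow: "ord w = r ^ (\<alpha> - 1)"
  proof -
    have "r dvd ord y" using oy a1 by (simp add: dvd_power)
    hence "ord w = ord y div r" unfolding w_def using ord_pow[OF yc] rR(1) by (simp add: prime_gt_0_nat)
    also have "\<dots> = r ^ (\<alpha> - 1)"
    proof -
      have "r ^ \<alpha> = r * r ^ (\<alpha> - 1)" using a1 by (cases \<alpha>) auto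
      thus ?thesis using oy prime_gt_0_nat[OF rR(1)] by simp
    qed
    finally show ?thesis .
  qed
  have wR: "generate G {w} \<subseteq> R" using cyc_le[OF rR(3)] pow_in_cyc[OF yc] y(3) unfolding w_def by blast
  have wZ: "generate G {w} \<subseteq> center G"
  proof (rule ccontr)
    assume "\<not> generate G {w} \<subseteq> center G"
    hence "generate G {w} = R" using m2[OF Rm cyc_sub[OF wc] wR] by simp
    hence "r ^ (\<alpha> - 1) = r ^ \<alpha>" using cyc_card[OF wc] ow rR(4) unfolding \<alpha>_def by simp
    moreover have "r ^ (\<alpha> - 1) < r ^ \<alpha>" using a1 prime_gt_1_nat[OF rR(1)] by (simp add: power_strict_increasing_iff)
    ultimately show False by simp
  qed
  show ?thesis
  proof (cases "\<exists>t. Factorial_Ring.prime t \<and> t dvd card (rcosets (center G)) \<and> t \<noteq> r")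
    case False
    define k where "k = multiplicity r (card (rcosets (center G)))"
    have qk: "card (rcosets (center G)) = r ^ k" unfolding k_def
      using one_prime_eq[OF qn_pos rR(1)] False by blast
    have k2: "k \<ge> 2"
    proof -
      have "k \<noteq> 0" using qk qn_gt1 by (metis less_irrefl power_0)
      moreover have "k \<noteq> 1" using qk qn_not_prime rR(1) by auto
      ultimately show ?thesis by simp
    qed
    have "r ^ (\<alpha> - 1) dvd card (center G)"
      using sub_dvd[OF cyc_sub[OF wc] Zs wZ fZ] cyc_card[OF wc] ow by simp
    hence "\<alpha> - 1 \<le> multiplicity r (card (center G))"
    proof (intro multiplicity_geI)
      show "card (center G) \<noteq> 0" using z_pos by simp
      show "\<not> is_unit r" using rR(1) not_prime_unit by blast
    qed
    moreover have "\<alpha> = multiplicity r (card (center G)) + k" unfolding \<alpha>_def k_def using mult_split[OF rR(1)] .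
    ultimately show ?thesis using k2 a1 by linarith
  next
    case True
    then obtain t where t: "Factorial_Ring.prime t" "t dvd card (rcosets (center G))" "t \<noteq> r" by blast
    have Zt: "\<And>t'. Factorial_Ring.prime t' \<Longrightarrow> t' dvd card (rcosets (center G)) \<Longrightarrow> t' \<noteq> r \<Longrightarrow> \<exists>c. card (center G) = t' ^ c"
      using Zt_lemma[OF rR(3) Rm rR(1) rR(4)] by blast
    obtain c where c: "card (center G) = t ^ c" using Zt[OF t] by blast
    have c1: "c \<ge> 1" using c z_gt1 by (cases c) auto
    have sRZ: "subgroup (R \<inter> center G) G" using subgroups_Inter_pair[OF rR(3) Zs] .
    have RZ1: "R \<inter> center G = {\<one>}"
    proof -
      have d1: "card (R \<inter> center G) dvd r ^ \<alpha>" using sub_dvd[OF sRZ rR(3) _ sub_fin[OF rR(3)]] rR(4) unfolding \<alpha>_def by simp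
      have d2: "card (R \<inter> center G) dvd t ^ c" using sub_dvd[OF sRZ Zs _ fZ] c by simp
      obtain i where i: "card (R \<inter> center G) = r ^ i" using d1 divides_primepow_nat[OF rR(1)] by blast
      obtain j where j: "card (R \<inter> center G) = t ^ j" using d2 divides_primepow_nat[OF t(1)] by blast
      have "j = 0"
      proof (rule ccontr)
        assume "j \<noteq> 0"
        hence "j \<ge> 1" by simp
        moreover have "r ^ i = t ^ j" using i j by simp
        ultimately have "r = t" using prime_pow_eq_prime[OF rR(1) t(1)] by blast
        thus False using t(3) by simp
      qed
      hence "card (R \<inter> center G) = 1" using j by simp
      thus ?thesis using int_eq_one[OF rR(3) Zs] by simp
    qed
    have a_eq: "\<alpha> = 1"
    proof (rule ccontr)
      assume "\<alpha> \<noteq> 1"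
      hence "\<alpha> \<ge> 2" using a1 by simp
      have "generate G {w} \<subseteq> {\<one>}" using wR wZ RZ1 by blast
      hence "card (generate G {w}) \<le> 1" using card_mono[of "{\<one>}"] by simp
      moreover have "r ^ (\<alpha> - 1) \<ge> r" using \<open>\<alpha> \<ge> 2\<close> prime_gt_1_nat[OF rR(1)] by (simp add: self_le_power)
      ultimately show False using cyc_card[OF wc] ow prime_gt_1_nat[OF rR(1)] by simp
    qed
    have cR: "card R = r" using rR(4) a_eq unfolding \<alpha>_def by simp
    have zt: "card (center G) = t"
    proof (rule ccontr)
      assume "card (center G) \<noteq> t"
      hence "c \<noteq> 1" using c by auto
      hence c2: "c \<ge> 2" using c1 by simp
      obtain W where W: "subgroup W G" "W \<subseteq> center G" "card W = t" using cauchy_pp[OF fin Zs t(1) c c1] by blast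
      have comm: "\<And>a b. a \<in> R \<Longrightarrow> b \<in> W \<Longrightarrow> a \<otimes> b = b \<otimes> a"
        using W(2) central_comm sub_c[OF rR(3)] by blast
      have sKW: "subgroup (R <#> W) G" using comm_prod_sub[OF rR(3) W(1) comm] .
      have RW: "R \<inter> W = {\<one>}" using RZ1 W(2) subgroup.one_closed[OF rR(3)] subgroup.one_closed[OF W(1)] by blast
      have cKW: "card (R <#> W) = r * t" using card_prod[OF fin rR(3) W(1) RW] cR W(3) by simp
      have RinKW: "R \<subseteq> R <#> W" using prod_left[OF W(1) sub_c[OF rR(3)]] .
      have nKW: "\<not> R <#> W \<subseteq> center G" using RinKW mixedD[OF Rm] by blast
      show False
      proof (cases "center G \<subseteq> R <#> W")
        case False
        hence "R <#> W \<in> mixedS G" using mixedI[OF sKW nKW] by simp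
        hence "card (R <#> W) = card R" using mixed_card Rm by blast
        thus False using cKW cR prime_gt_1_nat[OF t(1)] prime_gt_0_nat[OF rR(1)] by simp
      next
        case True
        have "center G \<subseteq> W"
        proof
          fix z0 assume z0: "z0 \<in> center G"
          then obtain k w0 where kw: "k \<in> R" "w0 \<in> W" "z0 = k \<otimes> w0" using True set_mult_elem by blast
          have kc: "k \<in> carrier G" "w0 \<in> carrier G" using kw sub_c[OF rR(3)] sub_c[OF W(1)] by auto
          have "k = z0 \<otimes> inv w0" using kw kc by simp
          moreover have "inv w0 \<in> center G" using kw(2) W(2) subgroup.m_inv_closed[OF Zs] by blast
          ultimately have "k \<in> center G" using z0 subgroup.m_closed[OF Zs] by simp
          hence "k = \<one>" using kw(1) RZ1 by blast
          thus "z0 \<in> W" using kw kc by simp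
        qed
        hence "card (center G) \<le> t" using card_mono[OF sub_fin[OF W(1)]] W(3) by metis
        moreover have "t ^ 1 < t ^ c" using c2 prime_gt_1_nat[OF t(1)] power_strict_increasing_iff[of t 1 c] by simp
        ultimately show False using c by simp
      qed
    qed
    have allp: "\<And>p. Factorial_Ring.prime p \<Longrightarrow> p dvd card (carrier G) \<Longrightarrow> p = r \<or> p = t"
    proof (rule ccontr)
      fix p assume p: "Factorial_Ring.prime p" "p dvd card (carrier G)" "\<not> (p = r \<or> p = t)"
      have "\<not> p dvd card (center G)" using zt p t(1) primes_dvd_imp_eq by metis
      hence pq: "p dvd card (rcosets (center G))" using p(1,2) lagZ prime_dvd_mult_iff by metis
      obtain c' where c': "card (center G) = p ^ c'" using Zt[OF p(1) pq] p(3) by blast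
      have "c' \<ge> 1" using c' zt prime_gt_1_nat[OF t(1)] by (cases c') auto
      hence "p dvd p ^ c'" by (simp add: dvd_power)
      hence "p dvd t" using c' zt by simp
      thus False using p t(1) primes_dvd_imp_eq by metis
    qed
    define \<gamma> where "\<gamma> = multiplicity t (card (carrier G))"
    have "card (carrier G) = r ^ \<alpha> * t ^ \<gamma>" unfolding \<alpha>_def \<gamma>_def
      using two_primes_eq[OF n_pos rR(1) t(1)] t(3) allp by metis
    hence n_eq: "card (carrier G) = r * t ^ \<gamma>" using a_eq by simp
    have g2: "\<gamma> \<ge> 2"
    proof -
      have "multiplicity t (card (center G)) = 1" using zt t(1) by (simp add: prime_imp_prime_elem)
      moreover have "multiplicity t (card (rcosets (center G))) > 0"
        using prime_multiplicity_gt_zero_iff[OF prime_imp_prime_elem[OF t(1)], of "card (rcosets (center G))"] t(2) qn_pos by simp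
      ultimately show ?thesis unfolding \<gamma>_def using mult_split[OF t(1)] by simp
    qed
    show ?thesis
      apply (rule exI[of _ R], rule exI[of _ r], rule exI[of _ t], rule exI[of _ \<gamma>])
      using Rm rR(1) t(1) t(3) cR zt RZ1 n_eq g2 by simp
  qed
qed

end


locale CM = MT +
  fixes K R :: "'a set" and r t \<gamma> :: nat
  assumes Km: "K \<in> mixedS G" and r: "Factorial_Ring.prime r" and t: "Factorial_Ring.prime t" and rt: "r \<noteq> t"
    and cK: "card K = r" and cZ: "card (center G) = t" and KZ1: "K \<inter> center G = {\<one>}"
    and cG: "card (carrier G) = r * t ^ \<gamma>" and g2: "\<gamma> \<ge> 2"
    and sR: "subgroup R G" and cR: "card R = t ^ \<gamma>"
begin

lemma sK: "subgroup K G" using mixedD[OF Km] by simp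
lemma Kc: "K \<subseteq> carrier G" using sub_c[OF sK] .
lemma Rc: "R \<subseteq> carrier G" using sub_c[OF sR] .
lemma r1: "r > 1" using prime_gt_1_nat[OF r] .
lemma t1: "t > 1" using prime_gt_1_nat[OF t] .
lemma KnZ: "\<not> K \<subseteq> center G" using mixedD[OF Km] by simp

lemma r_ndvd_tpow: "\<not> r dvd t ^ k"
proof
  assume "r dvd t ^ k"
  hence "r dvd t" using r prime_dvd_power by blast
  thus False using r t rt primes_dvd_imp_eq by blast
qed

lemma tgrp: "subgroup Y G \<Longrightarrow> card Y dvd t ^ k \<Longrightarrow> Y \<subseteq> center G \<or> center G \<subseteq> Y"
proof (rule ccontr)
  assume Y: "subgroup Y G" "card Y dvd t ^ k" and n: "\<not> (Y \<subseteq> center G \<or> center G \<subseteq> Y)"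
  hence "Y \<in> mixedS G" using mixedI by blast
  hence "card Y = r" using mixed_card Km cK by metis
  thus False using Y(2) r_ndvd_tpow by simp
qed

lemma ZR: "center G \<subseteq> R"
proof -
  have "\<not> R \<subseteq> center G"
  proof
    assume "R \<subseteq> center G"
    hence "card R \<le> card (center G)" using card_mono[OF fZ] by simp
    moreover have "t ^ 1 < t ^ \<gamma>" using g2 t1 power_strict_increasing_iff[of t 1 \<gamma>] by simp
    ultimately show False using cR cZ by simp
  qed
  thus ?thesis using tgrp[OF sR, of \<gamma>] cR by simp
qed

definition KZ where "KZ = K <#> center G"

lemma KZ_comm0: "\<And>a b. a \<in> K \<Longrightarrow> b \<in> center G \<Longrightarrow> a \<otimes> b = b \<otimes> a"
  using central_comm Kc by blast

lemma sKZ: "subgroup KZ G" unfolding KZ_def using comm_prod_sub[OF sK Zs KZ_comm0] .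
lemma KZc: "KZ \<subseteq> carrier G" using sub_c[OF sKZ] .
lemma cKZ: "card KZ = r * t" unfolding KZ_def using card_prod[OF fin sK Zs KZ1] cK cZ by simp
lemma Z_KZ: "center G \<subseteq> KZ" unfolding KZ_def using prod_right[OF sK Zc] .
lemma K_KZ: "K \<subseteq> KZ" unfolding KZ_def using prod_left[OF Zs Kc] .
lemma KZ_nZ: "\<not> KZ \<subseteq> center G" using K_KZ KnZ by blast

lemma Kgen: "\<exists>x\<in>K. x \<notin> center G \<and> generate G {x} = K" using mixed_gen[OF Km] .

lemma KZ_comm: "a \<in> KZ \<Longrightarrow> b \<in> KZ \<Longrightarrow> a \<otimes> b = b \<otimes> a"
proof -
  obtain x where x: "x \<in> K" "generate G {x} = K" using Kgen by blast
  have xc: "x \<in> carrier G" using x Kc by auto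
  assume "a \<in> KZ" "b \<in> KZ"
  thus ?thesis unfolding KZ_def using prod_Z_comm[OF sK] cyc_comm[OF fin xc] x(2) by blast
qed

lemma cnt_div:
  assumes A: "subgroup A G" "card A = r * t" "center G \<subseteq> A" and S: "subgroup S G" "center G \<subseteq> S" "S \<subseteq> A"
  shows "S = center G \<or> S = A"
proof -
  have d1: "card S dvd r * t" using sub_dvd[OF S(1) A(1) S(3) sub_fin[OF A(1)]] A(2) by simp
  have d2: "t dvd card S" using sub_dvd[OF Zs S(1) S(2) sub_fin[OF S(1)]] cZ by simp
  obtain d where d: "card S = t * d" using d2 by blast
  have "d dvd r" using d1 d t1 by (simp add: mult.commute)
  hence "d = 1 \<or> d = r" using r prime_nat_iff by blast
  thus ?thesis
  proof
    assume "d = 1"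
    hence "card S = card (center G)" using d cZ by simp
    thus ?thesis using card_subset_eq[OF sub_fin[OF S(1)] S(2)] by simp
  next
    assume "d = r"
    hence "card S = card A" using d A(2) by simp
    thus ?thesis using card_subset_eq[OF sub_fin[OF A(1)] S(3)] by simp
  qed
qed

lemma CNT:
  assumes N: "normalizer G KZ = KZ"
  shows "\<And>g. g \<in> carrier G \<Longrightarrow> cj G g R = R"
proof -
  let ?E = "{S. S \<subseteq> carrier G}"
  have ActG: "group_action G ?E cact" using action_by_conjugation_on_power_set .
  define Xs where "Xs = (\<lambda>g. cj G g KZ) ` carrier G"
  have orb: "orbit G cact KZ = Xs" unfolding Xs_def orbit_def using KZc by (auto simp: conj_eq_cj)
  have "card Xs * card (normalizer G KZ) = card (carrier G)"
    using group_action.orbit_stabilizer_theorem[OF ActG, of KZ] KZc orb unfolding normalizer_def order_def by simp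
  hence cX1: "card Xs * (r * t) = r * t ^ \<gamma>" using N cKZ cG by simp
  have cX: "card Xs * t = t ^ \<gamma>"
  proof -
    have "r * (card Xs * t) = r * t ^ \<gamma>" using cX1 by (simp add: algebra_simps)
    thus ?thesis using r1 by simp
  qed
  have XsP: "\<And>A. A \<in> Xs \<Longrightarrow> subgroup A G \<and> card A = r * t \<and> center G \<subseteq> A"
  proof -
    fix A assume "A \<in> Xs"
    then obtain g where g: "g \<in> carrier G" "A = cj G g KZ" unfolding Xs_def by auto
    show "subgroup A G \<and> card A = r * t \<and> center G \<subseteq> A"
      using g cj_sub[OF sKZ g(1)] cj_card[OF g(1) KZc] cKZ cj_Zsub_iff[OF g(1) KZc] Z_KZ by simp
  qed
  have disj: "\<And>A1 A2. A1 \<in> Xs \<Longrightarrow> A2 \<in> Xs \<Longrightarrow> A1 \<noteq> A2 \<Longrightarrow> A1 \<inter> A2 = center G"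
  proof -
    fix A1 A2 assume A: "A1 \<in> Xs" "A2 \<in> Xs" "A1 \<noteq> A2"
    have p1: "subgroup A1 G" "card A1 = r * t" "center G \<subseteq> A1" using XsP[OF A(1)] by auto
    have p2: "subgroup A2 G" "card A2 = r * t" "center G \<subseteq> A2" using XsP[OF A(2)] by auto
    have sS: "subgroup (A1 \<inter> A2) G" using subgroups_Inter_pair[OF p1(1) p2(1)] .
    have c1: "A1 \<inter> A2 = center G \<or> A1 \<inter> A2 = A1" using cnt_div[OF p1 sS] p1(3) p2(3) by blast
    have c2: "A1 \<inter> A2 = center G \<or> A1 \<inter> A2 = A2" using cnt_div[OF p2 sS] p1(3) p2(3) by blast
    show "A1 \<inter> A2 = center G" using c1 c2 A(3) by auto
  qed
  define W where "W = (\<Union>A\<in>Xs. A - center G)"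
  have fXs: "finite Xs" unfolding Xs_def using fin by simp
  have cW: "card W = card Xs * (r * t - t)"
  proof -
    have "card W = (\<Sum>A\<in>Xs. card (A - center G))"
      unfolding W_def
    proof (rule card_UN_disjoint[OF fXs])
      show "\<forall>A\<in>Xs. finite (A - center G)" using XsP sub_fin by blast
      show "\<forall>A1\<in>Xs. \<forall>A2\<in>Xs. A1 \<noteq> A2 \<longrightarrow> (A1 - center G) \<inter> (A2 - center G) = {}"
        using disj by blast
    qed
    also have "\<dots> = (\<Sum>A\<in>Xs. r * t - t)"
    proof (rule sum.cong[OF refl])
      fix A assume "A \<in> Xs"
      hence p: "subgroup A G" "card A = r * t" "center G \<subseteq> A" using XsP by auto
      show "card (A - center G) = r * t - t" using card_Diff_subset[OF fZ p(3)] p(2) cZ by simp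
    qed
    finally show ?thesis by simp
  qed
  have cW2: "card W + t ^ \<gamma> = card (carrier G)"
  proof -
    have "card Xs * (r * t - t) = card Xs * t * (r - 1)" by (simp add: algebra_simps diff_mult_distrib2)
    hence "card W = t ^ \<gamma> * (r - 1)" using cW cX by simp
    hence "card W + t ^ \<gamma> = t ^ \<gamma> * r" using r1 by (simp add: algebra_simps diff_mult_distrib2)
    thus ?thesis using cG by (simp add: mult.commute)
  qed
  have Wc: "W \<subseteq> carrier G" unfolding W_def using XsP sub_c by blast
  have conjR: "\<And>g. g \<in> carrier G \<Longrightarrow> cj G g R = carrier G - W"
  proof -
    fix g assume g: "g \<in> carrier G"
    let ?R' = "cj G g R"
    have sR': "subgroup ?R' G" using cj_sub[OF sR g] .
    have cR': "card ?R' = t ^ \<gamma>" using cj_card[OF g Rc] cR by simp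
    have ZR': "center G \<subseteq> ?R'" using cj_Zsub_iff[OF g Rc] ZR by simp
    have dis: "?R' \<inter> W = {}"
    proof -
      have "\<And>A. A \<in> Xs \<Longrightarrow> ?R' \<inter> A = center G"
      proof -
        fix A assume "A \<in> Xs"
        hence p: "subgroup A G" "card A = r * t" "center G \<subseteq> A" using XsP by auto
        have sS: "subgroup (?R' \<inter> A) G" using subgroups_Inter_pair[OF sR' p(1)] .
        have "?R' \<inter> A = center G \<or> ?R' \<inter> A = A" using cnt_div[OF p sS] ZR' p(3) by blast
        moreover have "?R' \<inter> A \<noteq> A"
        proof
          assume "?R' \<inter> A = A"
          hence "A \<subseteq> ?R'" by blast
          hence "card A dvd t ^ \<gamma>" using sub_dvd[OF p(1) sR' _ sub_fin[OF sR']] cR' by simp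
          hence "r dvd t ^ \<gamma>" using p(2) by (metis dvd_mult_left)
          thus False using r_ndvd_tpow by simp
        qed
        ultimately show "?R' \<inter> A = center G" by simp
      qed
      thus ?thesis unfolding W_def by blast
    qed
    have un: "?R' \<union> W \<subseteq> carrier G" using sub_c[OF sR'] Wc by simp
    have "card (?R' \<union> W) = card (carrier G)"
      using card_Un_disjoint[OF sub_fin[OF sR'] finite_subset[OF Wc fin] dis] cR' cW2 by simp
    hence "?R' \<union> W = carrier G" using card_subset_eq[OF fin un] by simp
    thus "?R' = carrier G - W" using dis by blast
  qed
  fix g assume g: "g \<in> carrier G"
  have "cj G \<one> R = R" using cj_one[OF Rc] .
  thus "cj G g R = R" using conjR[OF g] conjR[OF one_closed] by simp
qed

end


context CM begin

lemma tpow_gt: "t < t ^ \<gamma>"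
  using g2 t1 power_strict_increasing_iff[of t 1 \<gamma>] by simp

lemma Rhigh_if_normal: "(\<And>g. g \<in> carrier G \<Longrightarrow> cj G g R = R) \<Longrightarrow> R \<in> highS G"
proof -
  assume n: "\<And>g. g \<in> carrier G \<Longrightarrow> cj G g R = R"
  have "normalizer G R = carrier G" using normalizer_iff[OF Rc] n by auto
  moreover have "R \<noteq> carrier G"
  proof
    assume "R = carrier G"
    hence e: "card R = card (carrier G)" by simp
    have "t ^ \<gamma> > 0" using t1 by simp
    moreover have "r * t ^ \<gamma> \<ge> 2 * t ^ \<gamma>" using r1 by simp
    ultimately show False using e cR cG by linarith
  qed
  ultimately have "normalizer G R \<noteq> R" by simp
  moreover have "\<not> R \<subseteq> center G"
  proof
    assume "R \<subseteq> center G"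
    hence "R = center G" using ZR by auto
    hence "t ^ \<gamma> = t" using cR cZ by simp
    thus False using tpow_gt by simp
  qed
  ultimately show ?thesis using highI[OF sR ZR] by simp
qed

lemma M1:
  assumes Y: "subgroup Y G" "center G \<subseteq> Y" "Y \<noteq> center G" "Y \<subseteq> R" "Y \<noteq> R"
  shows False
proof -
  obtain g where g: "g \<in> R" "g \<notin> Y" "cj G g Y = Y" using PG[OF fin sR t cR Y(1) Y(4) Y(5)] by blast
  have gc: "g \<in> carrier G" using g Rc by auto
  have "g \<in> normalizer G Y" using normalizer_iff[OF sub_c[OF Y(1)]] g gc by simp
  hence "normalizer G Y \<noteq> Y" using g by blast
  moreover have "\<not> Y \<subseteq> center G" using Y(2,3) by auto
  ultimately have Yh: "Y \<in> highS G" using highI[OF Y(1,2)] by simp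
  have dY: "card Y dvd t ^ \<gamma>" using sub_dvd[OF Y(1) sR Y(4) sub_fin[OF sR]] cR by simp
  show False
  proof (cases "normalizer G KZ = KZ")
    case False
    hence "KZ \<in> highS G" using highI[OF sKZ Z_KZ KZ_nZ] by simp
    hence "card KZ = card Y" using high_card Yh by blast
    hence "r dvd t ^ \<gamma>" using dY cKZ by (metis dvd_mult_left)
    thus False using r_ndvd_tpow by simp
  next
    case True
    hence "R \<in> highS G" using Rhigh_if_normal CNT by blast
    hence "card R = card Y" using high_card Yh by blast
    hence "Y = R" using card_subset_eq[OF sub_fin[OF sR] Y(4)] by simp
    thus False using Y(5) by simp
  qed
qed

lemma R_gen: "y \<in> R \<Longrightarrow> y \<notin> center G \<Longrightarrow> generate G {y} = R"
proof -
  assume y: "y \<in> R" "y \<notin> center G"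
  have yc: "y \<in> carrier G" using y Rc by auto
  have s: "generate G {y} \<subseteq> R" using cyc_le[OF sR y(1)] .
  have "card (generate G {y}) dvd t ^ \<gamma>" using sub_dvd[OF cyc_sub[OF yc] sR s sub_fin[OF sR]] cR by simp
  hence "center G \<subseteq> generate G {y}" using tgrp[OF cyc_sub[OF yc]] cyc_in[OF yc] y(2) by blast
  moreover have "generate G {y} \<noteq> center G" using cyc_in[OF yc] y(2) by blast
  ultimately show ?thesis using M1[OF cyc_sub[OF yc]] s by blast
qed

lemma exists_R_nZ: "\<exists>y\<in>R. y \<notin> center G"
proof (rule ccontr)
  assume "\<not> (\<exists>y\<in>R. y \<notin> center G)"
  hence "R \<subseteq> center G" by blast
  hence "R = center G" using ZR by auto
  hence "t ^ \<gamma> = t" using cR cZ by simp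
  thus False using tpow_gt by simp
qed

lemma gamma2: "\<gamma> = 2"
proof (rule ccontr)
  assume "\<gamma> \<noteq> 2"
  hence g3: "\<gamma> \<ge> 3" using g2 by simp
  obtain y where y: "y \<in> R" "y \<notin> center G" using exists_R_nZ by blast
  have yc: "y \<in> carrier G" using y Rc by auto
  have oy: "ord y = t ^ \<gamma>" using cyc_card[OF yc] R_gen[OF y] cR by simp
  define w where "w = y [^] t"
  have wc: "w \<in> carrier G" unfolding w_def using yc by simp
  have ow: "ord w = t ^ (\<gamma> - 1)"
  proof -
    have "t dvd ord y" using oy g2 by (simp add: dvd_power)
    hence "ord w = ord y div t" unfolding w_def using ord_pow[OF yc] t1 by simp
    moreover have "t ^ \<gamma> = t * t ^ (\<gamma> - 1)" using g2 by (cases \<gamma>) auto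
    ultimately show ?thesis using oy t1 by simp
  qed
  have wR: "generate G {w} \<subseteq> R" using cyc_le[OF sR] pow_in_cyc[OF yc] R_gen[OF y] unfolding w_def by blast
  have cw: "card (generate G {w}) = t ^ (\<gamma> - 1)" using cyc_card[OF wc] ow by simp
  have "card (generate G {w}) dvd t ^ \<gamma>" using sub_dvd[OF cyc_sub[OF wc] sR wR sub_fin[OF sR]] cR by simp
  hence or: "generate G {w} \<subseteq> center G \<or> center G \<subseteq> generate G {w}" using tgrp[OF cyc_sub[OF wc]] by blast
  have big: "t ^ 1 < t ^ (\<gamma> - 1)" using g3 t1 power_strict_increasing_iff[of t 1 "\<gamma> - 1"] by simp
  have "\<not> generate G {w} \<subseteq> center G"
  proof
    assume "generate G {w} \<subseteq> center G"
    hence "card (generate G {w}) \<le> card (center G)" using card_mono[OF fZ] by simp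
    thus False using cw cZ big by simp
  qed
  hence ZW: "center G \<subseteq> generate G {w}" using or by simp
  have "generate G {w} \<noteq> center G" using cw cZ big by auto
  moreover have "generate G {w} \<noteq> R"
  proof
    assume "generate G {w} = R"
    hence "t ^ (\<gamma> - 1) = t ^ \<gamma>" using cw cR by simp
    moreover have "t ^ (\<gamma> - 1) < t ^ \<gamma>" using g2 t1 power_strict_increasing_iff[of t "\<gamma> - 1" \<gamma>] by simp
    ultimately show False by simp
  qed
  ultimately show False using M1[OF cyc_sub[OF wc] ZW _ wR] by blast
qed

lemma cR2: "card R = t ^ 2" using cR gamma2 by simp
lemma cG2: "card (carrier G) = r * t ^ 2" using cG gamma2 by simp

lemma KR1: "K \<inter> R = {\<one>}"
proof -
  have sS: "subgroup (K \<inter> R) G" using subgroups_Inter_pair[OF sK sR] .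
  have d1: "card (K \<inter> R) dvd r" using sub_dvd[OF sS sK _ sub_fin[OF sK]] cK by simp
  have d2: "card (K \<inter> R) dvd t ^ 2" using sub_dvd[OF sS sR _ sub_fin[OF sR]] cR2 by simp
  have "card (K \<inter> R) = 1 \<or> card (K \<inter> R) = r" using d1 r prime_nat_iff by blast
  hence "card (K \<inter> R) = 1" using d2 r_ndvd_tpow by auto
  thus ?thesis using int_eq_one[OF sK sR] by simp
qed

lemma KR_all: "K <#> R = carrier G"
proof -
  have "card (K <#> R) = card (carrier G)" using card_prod[OF fin sK sR KR1] cK cR2 cG2 by simp
  moreover have "K <#> R \<subseteq> carrier G" using setmult_subset_G[OF Kc Rc] .
  ultimately show ?thesis using card_subset_eq[OF fin] by blast
qed

lemma central_if_comm:
  assumes x: "x \<in> K" "generate G {x} = K" and y: "y \<in> R" "generate G {y} = R"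
    and c: "x \<otimes> y = y \<otimes> x"
  shows "x \<in> center G"
proof -
  have xc: "x \<in> carrier G" using x Kc by auto
  have yc: "y \<in> carrier G" using y Rc by auto
  have cR': "\<And>b. b \<in> R \<Longrightarrow> x \<otimes> b = b \<otimes> x"
    using comm_cyc[OF fin yc xc c[symmetric]] y(2) by (metis)
  have cK': "\<And>a. a \<in> K \<Longrightarrow> x \<otimes> a = a \<otimes> x"
    using cyc_comm[OF fin xc] x by (metis cyc_in[OF xc])
  have "\<forall>g\<in>carrier G. x \<otimes> g = g \<otimes> x"
  proof
    fix g assume "g \<in> carrier G"
    then obtain a b where ab: "a \<in> K" "b \<in> R" "g = a \<otimes> b" using KR_all set_mult_elem by blast
    have abc: "a \<in> carrier G" "b \<in> carrier G" using ab Kc Rc by auto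
    have "x \<otimes> g = (x \<otimes> a) \<otimes> b" using ab abc xc by (simp add: m_assoc)
    also have "\<dots> = a \<otimes> (x \<otimes> b)" using cK'[OF ab(1)] abc xc by (simp add: m_assoc)
    also have "\<dots> = a \<otimes> (b \<otimes> x)" using cR'[OF ab(2)] by simp
    also have "\<dots> = g \<otimes> x" using ab abc xc by (simp add: m_assoc)
    finally show "x \<otimes> g = g \<otimes> x" .
  qed
  thus ?thesis unfolding center_def using xc by auto
qed

end


context CM begin

lemma sub_pow: "subgroup H G \<Longrightarrow> a \<in> H \<Longrightarrow> a [^] (k::nat) \<in> H"
proof -
  assume H: "subgroup H G" and a: "a \<in> H"
  have "a \<in> carrier G" using a sub_c[OF H] by auto
  thus ?thesis using pow_in_cyc cyc_le[OF H a] by blast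
qed

lemma conj_central: "z \<in> center G \<Longrightarrow> g \<in> carrier G \<Longrightarrow> g \<otimes> z \<otimes> inv g = z"
  using central_comm[of z g] Zc by (metis cancel4 subsetD)

lemma R_comm: "a \<in> R \<Longrightarrow> b \<in> R \<Longrightarrow> a \<otimes> b = b \<otimes> a"
proof -
  assume ab: "a \<in> R" "b \<in> R"
  obtain y where y: "y \<in> R" "y \<notin> center G" using exists_R_nZ by blast
  have yc: "y \<in> carrier G" using y Rc by auto
  show ?thesis using cyc_comm[OF fin yc] R_gen[OF y] ab by blast
qed

lemma yt_Z: "y \<in> R \<Longrightarrow> y [^] t \<in> center G"
proof -
  assume y: "y \<in> R"
  have yc: "y \<in> carrier G" using y Rc by auto
  let ?w = "y [^] t"
  have wc: "?w \<in> carrier G" using yc by simp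
  have "?w [^] t = \<one>"
  proof -
    have "?w [^] t = y [^] (t * t)" using nat_pow_pow[OF yc] by simp
    also have "\<dots> = y [^] card R" using cR2 by (simp add: power2_eq_square)
    also have "\<dots> = \<one>"
    proof -
      have "ord y dvd card R" using sub_dvd[OF cyc_sub[OF yc] sR cyc_le[OF sR y] sub_fin[OF sR]] cyc_card[OF yc] by simp
      thus ?thesis using pow_eq_id[OF yc] by simp
    qed
    finally show ?thesis .
  qed
  hence ow: "ord ?w dvd t" using pow_eq_id[OF wc] by simp
  have wR: "generate G {?w} \<subseteq> R" using cyc_le[OF sR sub_pow[OF sR y]] .
  have "card (generate G {?w}) dvd t ^ 2" using sub_dvd[OF cyc_sub[OF wc] sR wR sub_fin[OF sR]] cR2 by simp
  hence or: "generate G {?w} \<subseteq> center G \<or> center G \<subseteq> generate G {?w}" using tgrp[OF cyc_sub[OF wc]] by blast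
  have cw: "card (generate G {?w}) \<le> t" using cyc_card[OF wc] ow t1 by (simp add: dvd_imp_le)
  have "generate G {?w} \<subseteq> center G"
  proof (cases "generate G {?w} \<subseteq> center G")
    case False
    hence Zw: "center G \<subseteq> generate G {?w}" using or by simp
    hence "card (center G) \<le> card (generate G {?w})" using card_mono[OF sub_fin[OF cyc_sub[OF wc]]] by simp
    hence "card (generate G {?w}) = card (center G)" using cw cZ by simp
    hence "center G = generate G {?w}" using card_subset_eq[OF sub_fin[OF cyc_sub[OF wc]] Zw] by simp
    thus ?thesis by simp
  qed simp
  thus ?thesis using cyc_in[OF wc] by blast
qed

lemma small_in_Z: "u \<in> R \<Longrightarrow> u [^] t = \<one> \<Longrightarrow> u \<in> center G"
proof -
  assume u: "u \<in> R" "u [^] t = \<one>"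
  have uc: "u \<in> carrier G" using u Rc by auto
  have ow: "ord u dvd t" using pow_eq_id[OF uc] u(2) by simp
  have uR: "generate G {u} \<subseteq> R" using cyc_le[OF sR u(1)] .
  have "card (generate G {u}) dvd t ^ 2" using sub_dvd[OF cyc_sub[OF uc] sR uR sub_fin[OF sR]] cR2 by simp
  hence or: "generate G {u} \<subseteq> center G \<or> center G \<subseteq> generate G {u}" using tgrp[OF cyc_sub[OF uc]] by blast
  have cw: "card (generate G {u}) \<le> t" using cyc_card[OF uc] ow t1 by (simp add: dvd_imp_le)
  have "generate G {u} \<subseteq> center G"
  proof (cases "generate G {u} \<subseteq> center G")
    case False
    hence Zw: "center G \<subseteq> generate G {u}" using or by simp
    hence "card (center G) \<le> card (generate G {u})" using card_mono[OF sub_fin[OF cyc_sub[OF uc]]] by simp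
    hence "card (generate G {u}) = card (center G)" using cw cZ by simp
    hence "center G = generate G {u}" using card_subset_eq[OF sub_fin[OF cyc_sub[OF uc]] Zw] by simp
    thus ?thesis by simp
  qed simp
  thus ?thesis using cyc_in[OF uc] by blast
qed

lemma K_normal: "\<And>g. g \<in> carrier G \<Longrightarrow> cj G g K = K"
proof (cases "normalizer G KZ = KZ")
  case False
  define Nn where "Nn = normalizer G KZ"
  have sN: "subgroup Nn G" unfolding Nn_def using normalizer_imp_subgroup[OF KZc] .
  have KZN: "KZ \<subseteq> Nn" unfolding Nn_def using sub_in_normalizer[OF sKZ] .
  have d1: "card Nn dvd r * t * t" using sub_dvd[OF sN subgroup_self sub_c[OF sN] fin] cG2 by (simp add: power2_eq_square mult.assoc)
  have d2: "r * t dvd card Nn" using sub_dvd[OF sKZ sN KZN sub_fin[OF sN]] cKZ by simp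
  obtain d where d: "card Nn = r * t * d" using d2 by blast
  have "d dvd t" using d1 d r1 t1 by simp
  hence "d = 1 \<or> d = t" using t prime_nat_iff by blast
  hence Nall: "Nn = carrier G"
  proof
    assume "d = 1"
    hence "card Nn = card KZ" using d cKZ by simp
    hence "Nn = KZ" using card_subset_eq[OF sub_fin[OF sN] KZN] by simp
    thus ?thesis using False unfolding Nn_def by simp
  next
    assume "d = t"
    hence "card Nn = card (carrier G)" using d cG2 by (simp add: power2_eq_square mult.assoc)
    thus ?thesis using card_subset_eq[OF fin sub_c[OF sN]] by simp
  qed
  fix g assume g: "g \<in> carrier G"
  have KZg: "cj G g KZ = KZ" using Nall g normalizer_iff[OF KZc] unfolding Nn_def by blast
  let ?K' = "cj G g K"
  have sK': "subgroup ?K' G" using cj_sub[OF sK g] .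
  have cK': "card ?K' = r" using cj_card[OF g Kc] cK by simp
  have K'KZ: "?K' \<subseteq> KZ" using cj_mono[OF K_KZ, of g] KZg by simp
  show "cj G g K = K"
  proof (rule ccontr)
    assume ne: "?K' \<noteq> K"
    have sS: "subgroup (K \<inter> ?K') G" using subgroups_Inter_pair[OF sK sK'] .
    have "card (K \<inter> ?K') dvd r" using sub_dvd[OF sS sK _ sub_fin[OF sK]] cK by simp
    hence "card (K \<inter> ?K') = 1 \<or> card (K \<inter> ?K') = r" using r prime_nat_iff by blast
    hence KK: "K \<inter> ?K' = {\<one>}"
    proof
      assume "card (K \<inter> ?K') = r"
      hence "K \<inter> ?K' = K" "K \<inter> ?K' = ?K'"
        using card_subset_eq[OF sub_fin[OF sK], of "K \<inter> ?K'"] card_subset_eq[OF sub_fin[OF sK'], of "K \<inter> ?K'"] cK cK' by auto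
      thus ?thesis using ne by simp
    qed (rule int_eq_one[OF sK sK'])
    have comm: "\<And>a b. a \<in> K \<Longrightarrow> b \<in> ?K' \<Longrightarrow> a \<otimes> b = b \<otimes> a" using KZ_comm K_KZ K'KZ by blast
    have sP: "subgroup (K <#> ?K') G" using comm_prod_sub[OF sK sK' comm] .
    have cP: "card (K <#> ?K') = r * r" using card_prod[OF fin sK sK' KK] cK cK' by simp
    have PKZ: "K <#> ?K' \<subseteq> KZ"
    proof
      fix u assume "u \<in> K <#> ?K'"
      then obtain a b where ab: "a \<in> K" "b \<in> ?K'" "u = a \<otimes> b" using set_mult_elem by blast
      thus "u \<in> KZ" using subgroup.m_closed[OF sKZ] K_KZ K'KZ by blast
    qed
    have "r * r dvd r * t" using sub_dvd[OF sP sKZ PKZ sub_fin[OF sKZ]] cP cKZ by simp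
    hence "r dvd t" using r1 by simp
    thus False using r_ndvd_tpow[of 1] by simp
  qed
next
  case True
  have Rn: "\<And>g. g \<in> carrier G \<Longrightarrow> cj G g R = R" using CNT[OF True] .
  obtain x where x: "x \<in> K" "x \<notin> center G" "generate G {x} = K" using Kgen by blast
  have xc: "x \<in> carrier G" using x Kc by auto
  have ox: "ord x = r" using cyc_card[OF xc] x(3) cK by simp
  obtain y where y: "y \<in> R" "y \<notin> center G" using exists_R_nZ by blast
  have yc: "y \<in> carrier G" using y Rc by auto
  have ygen: "generate G {y} = R" using R_gen[OF y] .
  define y' where "y' = x \<otimes> y \<otimes> inv x"
  have y'R: "y' \<in> R" unfolding y'_def using cj_elem[OF xc y(1)] Rn[OF xc] by simp
  have y'c: "y' \<in> carrier G" using y'R Rc by auto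
  have yt: "y [^] t \<in> center G" using yt_Z[OF y(1)] .
  have y't: "y' [^] t = y [^] t" unfolding y'_def using pow_cj[OF xc yc] conj_central[OF yt xc] by simp
  define u where "u = inv y \<otimes> y'"
  have uR: "u \<in> R" unfolding u_def using subgroup.m_closed[OF sR subgroup.m_inv_closed[OF sR y(1)] y'R] .
  have uc: "u \<in> carrier G" using uR Rc by auto
  have "u [^] t = inv y [^] t \<otimes> y' [^] t"
    unfolding u_def using pow_mult_distrib[OF R_comm[OF subgroup.m_inv_closed[OF sR y(1)] y'R]] yc y'c by simp
  also have "\<dots> = \<one>" using y't yc by (simp add: nat_pow_inv)
  finally have ut: "u [^] t = \<one>" .
  have uZ: "u \<in> center G" using small_in_Z[OF uR ut] .
  have y'eq: "y' = y \<otimes> u" unfolding u_def using yc y'c by simp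
  have iter: "\<And>k. x [^] (k::nat) \<otimes> y \<otimes> inv (x [^] k) = y \<otimes> u [^] k"
  proof -
    fix k :: nat
    show "x [^] k \<otimes> y \<otimes> inv (x [^] k) = y \<otimes> u [^] k"
    proof (induction k)
      case 0 thus ?case using yc by simp
    next
      case (Suc k)
      have xk: "x [^] k \<in> carrier G" using xc by simp
      have ukZ: "u [^] k \<in> center G" using sub_pow[OF Zs uZ] .
      have "x [^] Suc k \<otimes> y \<otimes> inv (x [^] Suc k) = x [^] k \<otimes> (x \<otimes> y \<otimes> inv x) \<otimes> inv (x [^] k)"
        using xc yc xk by (simp add: inv_mult_group m_assoc)
      also have "\<dots> = x [^] k \<otimes> (y \<otimes> u) \<otimes> inv (x [^] k)" using y'eq unfolding y'_def by simp
      also have "\<dots> = (x [^] k \<otimes> y \<otimes> inv (x [^] k)) \<otimes> u"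
        using xk yc uc central_comm[OF uZ inv_closed[OF xk]] by (simp add: m_assoc)
      also have "\<dots> = y \<otimes> u [^] Suc k" using Suc yc uc by (simp add: m_assoc)
      finally show ?case .
    qed
  qed
  have "y = y \<otimes> u [^] r" using iter[of r] ox pow_ord_eq_1[OF xc] yc by simp
  hence "u [^] r = \<one>" using yc uc by (metis l_cancel_one' nat_pow_closed)
  hence "ord u dvd r" using pow_eq_id[OF uc] by simp
  moreover have "ord u dvd t" using pow_eq_id[OF uc] ut by simp
  ultimately have "ord u = 1"
  proof -
    assume a: "ord u dvd r" "ord u dvd t"
    have "ord u = 1 \<or> ord u = t" using a(2) t prime_nat_iff by blast
    thus ?thesis using a(1) r t rt primes_dvd_imp_eq by auto
  qed
  hence "u = \<one>" using ord_eq_1[OF uc] by simp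
  hence "x \<otimes> y \<otimes> inv x = y" using y'eq yc unfolding y'_def by simp
  hence "x \<otimes> y = y \<otimes> x" using xc yc by (metis cancel3 m_closed)
  hence "x \<in> center G" using central_if_comm[OF x(1) x(3) y(1) ygen] by simp
  thus "\<And>g. g \<in> carrier G \<Longrightarrow> cj G g K = K" using x(2) by simp
qed

end


context CM begin

lemma centr: "centralizer_in G R K = center G"
proof
  show "center G \<subseteq> centralizer_in G R K"
    unfolding centralizer_in_def using ZR center_comm Kc by blast
  show "centralizer_in G R K \<subseteq> center G"
  proof
    fix h assume "h \<in> centralizer_in G R K"
    hence h: "h \<in> R" "\<And>k. k \<in> K \<Longrightarrow> h \<otimes> k = k \<otimes> h" unfolding centralizer_in_def by auto
    show "h \<in> center G"
    proof (rule ccontr)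
      assume hZ: "h \<notin> center G"
      obtain x where x: "x \<in> K" "x \<notin> center G" "generate G {x} = K" using Kgen by blast
      have "x \<otimes> h = h \<otimes> x" using h(2)[OF x(1)] by simp
      hence "x \<in> center G" using central_if_comm[OF x(1) x(3) h(1) R_gen[OF h(1) hZ]] by simp
      thus False using x(2) by simp
    qed
  qed
qed

lemma R_cyclic: "cyclic_group (G\<lparr>carrier := R\<rparr>)"
proof -
  obtain y where y: "y \<in> R" "y \<notin> center G" using exists_R_nZ by blast
  have "generate (G\<lparr>carrier := R\<rparr>) {y} = generate G {y}" using generate_consistent[of "{y}" R] y sR by simp
  hence "generate (G\<lparr>carrier := R\<rparr>) (R \<inter> {y}) = R" using R_gen[OF y] y by simp
  hence "subgroup_generated (G\<lparr>carrier := R\<rparr>) {y} = G\<lparr>carrier := R\<rparr>"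
    unfolding subgroup_generated_def by simp
  thus ?thesis unfolding cyclic_group_def using y by auto
qed

lemma t_dvd: "t dvd r - 1"
proof (rule ccontr)
  assume nd: "\<not> t dvd r - 1"
  obtain x where x: "x \<in> K" "x \<notin> center G" "generate G {x} = K" using Kgen by blast
  have xc: "x \<in> carrier G" using x Kc by auto
  have ox: "ord x = r" using cyc_card[OF xc] x(3) cK by simp
  obtain y where y: "y \<in> R" "y \<notin> center G" using exists_R_nZ by blast
  have yc: "y \<in> carrier G" using y Rc by auto
  have "y \<otimes> x \<otimes> inv y \<in> K" using cj_elem[OF yc x(1)] K_normal[OF yc] by simp
  then obtain k :: nat where k: "y \<otimes> x \<otimes> inv y = x [^] k" using cyc_elems[OF fin xc] x(3) by auto
  have iter: "\<And>j::nat. y [^] j \<otimes> x \<otimes> inv (y [^] j) = x [^] (k ^ j)"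
  proof -
    fix j :: nat
    show "y [^] j \<otimes> x \<otimes> inv (y [^] j) = x [^] (k ^ j)"
    proof (induction j)
      case 0 thus ?case using xc by simp
    next
      case (Suc j)
      have yj: "y [^] j \<in> carrier G" using yc by simp
      have "y [^] Suc j \<otimes> x \<otimes> inv (y [^] Suc j) = y [^] j \<otimes> (y \<otimes> x \<otimes> inv y) \<otimes> inv (y [^] j)"
        using yc xc yj by (simp add: inv_mult_group m_assoc)
      also have "\<dots> = y [^] j \<otimes> x [^] k \<otimes> inv (y [^] j)" using k by simp
      also have "\<dots> = (y [^] j \<otimes> x \<otimes> inv (y [^] j)) [^] k" using pow_cj[OF yj xc] by simp
      also have "\<dots> = x [^] (k ^ j * k)" using Suc nat_pow_pow[OF xc] by simp
      finally show ?case by (simp add: mult.commute)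
    qed
  qed
  have "y [^] t \<otimes> x = x \<otimes> y [^] t" using center_comm[OF yt_Z[OF y(1)] xc] .
  hence "y [^] t \<otimes> x \<otimes> inv (y [^] t) = x \<otimes> y [^] t \<otimes> inv (y [^] t)" by simp
  hence "y [^] t \<otimes> x \<otimes> inv (y [^] t) = x" using xc yc by simp
  hence "x [^] (k ^ t) = x [^] (1::nat)" using iter[of t] xc by simp
  hence c1: "[k ^ t = 1] (mod r)" using pow_eq_cong[OF xc ox, of "k ^ t" 1] by (simp del: nat_pow_Suc)
  have nk1: "\<not> [k = 1] (mod r)"
  proof
    assume "[k = 1] (mod r)"
    hence "x [^] k = x [^] (1::nat)" using pow_eq_cong[OF xc ox, of k 1] by (simp del: nat_pow_Suc)
    hence "y \<otimes> x \<otimes> inv y = x" using k xc by simp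
    hence yx: "y \<otimes> x = x \<otimes> y" using xc yc by (metis cancel3 m_closed)
    hence "x \<in> center G" using central_if_comm[OF x(1) x(3) y(1) R_gen[OF y]] by simp
    thus False using x(2) by simp
  qed
  have nrk: "\<not> r dvd k"
  proof
    assume "r dvd k"
    hence "x [^] k = \<one>" using pow_eq_id[OF xc] ox by simp
    hence "y \<otimes> x \<otimes> inv y = \<one>" using k by simp
    hence "inv y \<otimes> (y \<otimes> x \<otimes> inv y) \<otimes> y = inv y \<otimes> \<one> \<otimes> y" by simp
    hence "x = \<one>" using xc yc by (simp add: m_assoc)
    thus False using x(2) subgroup.one_closed[OF Zs] by simp
  qed
  have ferm: "[k ^ (r - 1) = 1] (mod r)" using fermat_theorem[OF r nrk] .
  have cop: "coprime t (r - 1)" using prime_imp_coprime[OF t nd] .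
  obtain a b where ab: "t * a = (r - 1) * b + gcd t (r - 1)" using bezout_nat[of t "r - 1"] t1 by auto
  hence ab1: "t * a = (r - 1) * b + 1" using cop by simp
  have "[k ^ (t * a) = 1] (mod r)"
  proof -
    have "[(k ^ t) ^ a = 1 ^ a] (mod r)" using cong_pow[OF c1] .
    thus ?thesis by (simp add: power_mult)
  qed
  moreover have "[k ^ (t * a) = k] (mod r)"
  proof -
    have "k ^ (t * a) = (k ^ (r - 1)) ^ b * k" using ab1 by (simp add: power_mult power_add)
    moreover have "[(k ^ (r - 1)) ^ b * k = 1 ^ b * k] (mod r)" using cong_mult[OF cong_pow[OF ferm] cong_refl] .
    ultimately show ?thesis by simp
  qed
  ultimately have "[k = 1] (mod r)" using cong_sym cong_trans by blast
  thus False using nk1 by simp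
qed

lemma final:
  "\<exists>K H p q. K \<lhd> G \<and> Factorial_Ring.prime (p::nat) \<and> card K = p
          \<and> subgroup H G \<and> cyclic_group (G\<lparr>carrier := H\<rparr>) \<and> Factorial_Ring.prime (q::nat) \<and> card H = q ^ 2
          \<and> q dvd p - 1 \<and> K \<inter> H = {\<one>} \<and> K <#> H = carrier G
          \<and> centralizer_in G H K = center G \<and> card (center G) = q"
proof -
  have nK: "K \<lhd> G"
  proof (rule normal_invI[OF sK])
    fix g h assume g: "g \<in> carrier G" and h: "h \<in> K"
    show "g \<otimes> h \<otimes> inv g \<in> K" using cj_elem[OF g h] K_normal[OF g] by simp
  qed
  show ?thesis
    apply (rule exI[of _ K], rule exI[of _ R], rule exI[of _ r], rule exI[of _ t])
    using nK r cK sR R_cyclic t cR2 t_dvd KR1 KR_all centr cZ by simp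
qed

end


theorem mainTheorem12:
  fixes G (structure)
  assumes "group G" and "finite (carrier G)"
    and "int (DD G) - int (DD (G\<lparr>carrier := center G\<rparr>)) = 3"
    and "DD (G Mod center G) = 1"
  shows "\<exists>K H p q. K \<lhd> G \<and> Factorial_Ring.prime (p::nat) \<and> card K = p
          \<and> subgroup H G \<and> cyclic_group (G\<lparr>carrier := H\<rparr>) \<and> Factorial_Ring.prime (q::nat) \<and> card H = q ^ 2
          \<and> q dvd p - 1 \<and> K \<inter> H = {\<one>} \<and> K <#> H = carrier G
          \<and> centralizer_in G H K = center G \<and> card (center G) = q"
proof -
  interpret group G by fact
  note red = reduction[OF assms(2) assms(3) assms(4)]
  have mt: "MT G"
    unfolding MT_def MT_axioms_def using assms(1,2) red by blast
  interpret MT G by (rule mt)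
  obtain K r t \<gamma> where s: "K \<in> mixedS G" "Factorial_Ring.prime r" "Factorial_Ring.prime t" "r \<noteq> t" "card K = r"
     "card (center G) = t" "K \<inter> center G = {\<one>}" "card (carrier G) = r * t ^ \<gamma>" "\<gamma> \<ge> 2"
    using main_structure by blast
  obtain R where R: "subgroup R G" "card R = t ^ multiplicity t (card (carrier G))" using sylow_ex[OF s(3)] by blast
  have "multiplicity t (card (carrier G)) = \<gamma>"
  proof -
    have "multiplicity t (r * t ^ \<gamma>) = multiplicity t r + multiplicity t (t ^ \<gamma>)"
      using prime_elem_multiplicity_mult_distrib[OF prime_imp_prime_elem[OF s(3)]] s(2,3)
      by (simp add: prime_gt_0_nat)
    also have "\<dots> = \<gamma>" using prime_multiplicity_other[OF s(3) s(2)] s(4) s(3) by (simp add: prime_imp_prime_elem)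
    finally show ?thesis using s(8) by simp
  qed
  hence cR: "card R = t ^ \<gamma>" using R(2) by simp
  have cm: "CM G K R r t \<gamma>"
    unfolding CM_def CM_axioms_def using mt s R(1) cR by blast
  interpret CM G K R r t \<gamma> by (rule cm)
  show ?thesis using final .
qed


end
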